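(* Let $R=\bigoplus_{\alpha\in\Gamma}R_{\alpha}$ be a graded integral domain and let $0\neq f,g\in R_H[X]$. Then there is an integer $m\geq1$ such that $A_f^{m+1}A_g=A_f^mA_{fg}$. In particular, if $\star$ is an e.a.b. semistar operation on $R$, then $A_{fg}^{\star}=(A_fA_g)^{\star}$.
   Context: $\Gamma$ is a commutative cancellative monoid (written additively) whose quotient group $\langle\Gamma\rangle$ is torsion-free. A graded integral domain $R=\bigoplus_{\alpha\in\Gamma}R_\alpha$ is an integral domain that is the direct sum of additive subgroups $R_\alpha$ with $R_\alpha R_\beta\subseteq R_{\alpha+\beta}$. $K$ is its quotient field, $H$ the set of nonzero homogeneous elements of $R$, and $R_H$ (graded by $\langle\Gamma\rangle$) the homogeneous quotient field. For $a\in R_H$, $C(a)$ is the $R$-submodule of $R_H$ generated by the homogeneous components of $a$; for $f=f_0+f_1X+\cdots+f_nX^n\in R_H[X]$, $A_f:=\sum_{i=0}^nC(f_i)$. A semistar operation on $R$ is a map $\star$ from the set of nonzero $R$-submodules of $K$ to itself such that for all $0\ne x\in K$ and $E,F$: $(xE)^\star=xE^\star$; $E\subseteq F\Rightarrow E^\star\subseteq F^\star$; $E\subseteq E^\star$; $(E^\star)^\star=E^\star$. It is e.a.b. if for all nonzero finitely generated fractional ideals $E,F,G$ of $R$, $(EF)^\star\subseteq(EG)^\star$ implies $F^\star\subseteq G^\star$. *)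

theory Defs
  imports "HOL-Computational_Algebra.Polynomial"
begin

text \<open>The monoid Gamma is modelled as a subset of an abelian group type 'g that
  contains 0 and is closed under addition (hence cancellative); its quotient group
  is the subgroup of differences, which is required to be torsion-free.\<close>

definition nsmul :: "nat \<Rightarrow> 'g::ab_group_add \<Rightarrow> 'g" where
  "nsmul n x = (((+) x) ^^ n) 0"

definition submonoid_add :: "'g::ab_group_add set \<Rightarrow> bool" where
  "submonoid_add \<Gamma> \<longleftrightarrow> 0 \<in> \<Gamma> \<and> (\<forall>a\<in>\<Gamma>. \<forall>b\<in>\<Gamma>. a + b \<in> \<Gamma>)"

definition quot_group :: "'g::ab_group_add set \<Rightarrow> 'g set" where
  "quot_group \<Gamma> = {a - b | a b. a \<in> \<Gamma> \<and> b \<in> \<Gamma>}"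

definition torsion_free_set :: "'g::ab_group_add set \<Rightarrow> bool" where
  "torsion_free_set G \<longleftrightarrow> (\<forall>x\<in>G. \<forall>n::nat. n > 0 \<longrightarrow> nsmul n x = 0 \<longrightarrow> x = 0)"

definition subring_of :: "'k::field set \<Rightarrow> bool" where
  "subring_of R \<longleftrightarrow> 0 \<in> R \<and> 1 \<in> R \<and>
     (\<forall>x\<in>R. \<forall>y\<in>R. x + y \<in> R \<and> x * y \<in> R) \<and> (\<forall>x\<in>R. - x \<in> R)"

text \<open>R is a subring of the field type 'k, and 'k is its quotient field K.\<close>
definition quotient_field_of :: "'k::field set \<Rightarrow> bool" where
  "quotient_field_of R \<longleftrightarrow> subring_of R \<and>
     (\<forall>x::'k. \<exists>a\<in>R. \<exists>b\<in>R. b \<noteq> 0 \<and> x = a / b)"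

text \<open>Rg alpha is the homogeneous part of degree alpha (set to {0} for alpha outside Gamma).\<close>
definition graded_domain :: "'g::ab_group_add set \<Rightarrow> ('g \<Rightarrow> 'k::field set) \<Rightarrow> 'k set \<Rightarrow> bool" where
  "graded_domain \<Gamma> Rg R \<longleftrightarrow>
     submonoid_add \<Gamma> \<and> torsion_free_set (quot_group \<Gamma>) \<and> quotient_field_of R \<and>
     (\<forall>\<alpha>. 0 \<in> Rg \<alpha> \<and> (\<forall>x\<in>Rg \<alpha>. \<forall>y\<in>Rg \<alpha>. x + y \<in> Rg \<alpha> \<and> - x \<in> Rg \<alpha>)) \<and>
     (\<forall>\<alpha>. \<alpha> \<notin> \<Gamma> \<longrightarrow> Rg \<alpha> = {0}) \<and>
     (\<forall>\<alpha> \<beta>. \<forall>x\<in>Rg \<alpha>. \<forall>y\<in>Rg \<beta>. x * y \<in> Rg (\<alpha> + \<beta>)) \<and>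
     R = {sum x S | x S. finite S \<and> (\<forall>\<alpha>\<in>S. x \<alpha> \<in> Rg \<alpha>)} \<and>
     (\<forall>x S. finite S \<and> (\<forall>\<alpha>\<in>S. x \<alpha> \<in> Rg \<alpha>) \<and> sum x S = 0 \<longrightarrow> (\<forall>\<alpha>\<in>S. x \<alpha> = 0))"

definition homog_nz :: "'g::ab_group_add set \<Rightarrow> ('g \<Rightarrow> 'k::field set) \<Rightarrow> 'k set" where
  "homog_nz \<Gamma> Rg = (\<Union>\<alpha>\<in>\<Gamma>. Rg \<alpha>) - {0}"

definition RH :: "'k::field set \<Rightarrow> ('g::ab_group_add \<Rightarrow> 'k set) \<Rightarrow> 'g set \<Rightarrow> 'k set" where
  "RH R Rg \<Gamma> = {b / h | b h. b \<in> R \<and> h \<in> homog_nz \<Gamma> Rg}"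

definition RH_deg :: "('g::ab_group_add \<Rightarrow> 'k::field set) \<Rightarrow> 'g \<Rightarrow> 'k set" where
  "RH_deg Rg \<delta> = {b / h | b h \<alpha> \<beta>. b \<in> Rg \<alpha> \<and> h \<in> Rg \<beta> \<and> h \<noteq> 0 \<and> \<delta> = \<alpha> - \<beta>}"

definition hcomp :: "('g::ab_group_add \<Rightarrow> 'k::field set) \<Rightarrow> 'g \<Rightarrow> 'k \<Rightarrow> 'k" where
  "hcomp Rg \<delta> a = (THE c. \<exists>x S. finite S \<and> (\<forall>\<gamma>\<in>S. x \<gamma> \<in> RH_deg Rg \<gamma>) \<and>
       a = sum x S \<and> c = (if \<delta> \<in> S then x \<delta> else 0))"

definition rspan :: "'k::field set \<Rightarrow> 'k set \<Rightarrow> 'k set" where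
  "rspan R S = {sum (\<lambda>s. r s * s) T | r T. finite T \<and> T \<subseteq> S \<and> (\<forall>s\<in>T. r s \<in> R)}"

definition mmul :: "'k::field set \<Rightarrow> 'k set \<Rightarrow> 'k set \<Rightarrow> 'k set" where
  "mmul R E F = rspan R {e * f | e f. e \<in> E \<and> f \<in> F}"

definition mpow :: "'k::field set \<Rightarrow> 'k set \<Rightarrow> nat \<Rightarrow> 'k set" where
  "mpow R E n = ((mmul R E) ^^ n) R"

definition Cont :: "'k::field set \<Rightarrow> ('g::ab_group_add \<Rightarrow> 'k set) \<Rightarrow> 'k \<Rightarrow> 'k set" where
  "Cont R Rg a = rspan R (range (\<lambda>\<delta>. hcomp Rg \<delta> a))"

definition Af :: "'k::field set \<Rightarrow> ('g::ab_group_add \<Rightarrow> 'k set) \<Rightarrow> 'k poly \<Rightarrow> 'k set" where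
  "Af R Rg f = rspan R (\<Union>i\<in>{0..degree f}. Cont R Rg (coeff f i))"

definition rsubmodule :: "'k::field set \<Rightarrow> 'k set \<Rightarrow> bool" where
  "rsubmodule R E \<longleftrightarrow> 0 \<in> E \<and> (\<forall>x\<in>E. \<forall>y\<in>E. x + y \<in> E) \<and> (\<forall>r\<in>R. \<forall>x\<in>E. r * x \<in> E)"

definition nz_submodule :: "'k::field set \<Rightarrow> 'k set \<Rightarrow> bool" where
  "nz_submodule R E \<longleftrightarrow> rsubmodule R E \<and> E \<noteq> {0}"

definition semistar :: "'k::field set \<Rightarrow> ('k set \<Rightarrow> 'k set) \<Rightarrow> bool" where
  "semistar R st \<longleftrightarrow>
     (\<forall>E. nz_submodule R E \<longrightarrow> nz_submodule R (st E)) \<and>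
     (\<forall>x E. x \<noteq> 0 \<and> nz_submodule R E \<longrightarrow> st ((\<lambda>e. x * e) ` E) = (\<lambda>e. x * e) ` st E) \<and>
     (\<forall>E F. nz_submodule R E \<and> nz_submodule R F \<and> E \<subseteq> F \<longrightarrow> st E \<subseteq> st F) \<and>
     (\<forall>E. nz_submodule R E \<longrightarrow> E \<subseteq> st E) \<and>
     (\<forall>E. nz_submodule R E \<longrightarrow> st (st E) = st E)"

definition frac_ideal :: "'k::field set \<Rightarrow> 'k set \<Rightarrow> bool" where
  "frac_ideal R E \<longleftrightarrow> rsubmodule R E \<and> (\<exists>d\<in>R. d \<noteq> 0 \<and> (\<lambda>e. d * e) ` E \<subseteq> R)"

definition fg_frac_ideal :: "'k::field set \<Rightarrow> 'k set \<Rightarrow> bool" where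
  "fg_frac_ideal R E \<longleftrightarrow> frac_ideal R E \<and> E \<noteq> {0} \<and> (\<exists>T. finite T \<and> E = rspan R T)"

definition eab :: "'k::field set \<Rightarrow> ('k set \<Rightarrow> 'k set) \<Rightarrow> bool" where
  "eab R st \<longleftrightarrow> semistar R st \<and>
     (\<forall>E F G. fg_frac_ideal R E \<and> fg_frac_ideal R F \<and> fg_frac_ideal R G \<longrightarrow>
        st (mmul R E F) \<subseteq> st (mmul R E G) \<longrightarrow> st F \<subseteq> st G)"

end

theory Submission
  imports Defs "HOL-Library.Product_Plus"
begin

locale sr =
  fixes R :: "'k::field set"
  assumes sub: "subring_of R"
begin

lemma R0: "0 \<in> R" and R1: "1 \<in> R"
  and Radd: "x \<in> R \<Longrightarrow> y \<in> R \<Longrightarrow> x + y \<in> R"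
  and Rmul: "x \<in> R \<Longrightarrow> y \<in> R \<Longrightarrow> x * y \<in> R"
  and Rneg: "x \<in> R \<Longrightarrow> - x \<in> R"
  using sub unfolding subring_of_def by auto

lemma mod_sum:
  assumes "rsubmodule R E" "finite T" "\<And>t. t \<in> T \<Longrightarrow> h t \<in> E"
  shows "sum h T \<in> E"
  using assms(2,3)
proof (induction T rule: finite_induct)
  case empty then show ?case using assms(1) by (simp add: rsubmodule_def)
next
  case (insert x F) then show ?case using assms(1) by (simp add: rsubmodule_def)
qed

lemma span_sub: "s \<in> S \<Longrightarrow> s \<in> rspan R S"
  unfolding rspan_def
  by (rule CollectI, rule exI[of _ "\<lambda>_. 1"], rule exI[of _ "{s}"]) (simp add: R1)

lemma span_mod: "rsubmodule R (rspan R S)"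
  unfolding rsubmodule_def
proof (intro conjI ballI)
  show "0 \<in> rspan R S" unfolding rspan_def
    by (rule CollectI, rule exI[of _ "\<lambda>_. 0"], rule exI[of _ "{}"]) simp
next
  fix x y assume "x \<in> rspan R S" "y \<in> rspan R S"
  then obtain r1 T1 r2 T2 where 1: "x = (\<Sum>s\<in>T1. r1 s * s)" "finite T1" "T1 \<subseteq> S" "\<forall>s\<in>T1. r1 s \<in> R"
    and 2: "y = (\<Sum>s\<in>T2. r2 s * s)" "finite T2" "T2 \<subseteq> S" "\<forall>s\<in>T2. r2 s \<in> R"
    unfolding rspan_def by blast
  define r where "r s = (if s \<in> T1 then r1 s else 0) + (if s \<in> T2 then r2 s else 0)" for s
  have "(\<Sum>s\<in>T1\<union>T2. r s * s) = (\<Sum>s\<in>T1\<union>T2. (if s \<in> T1 then r1 s * s else 0)) + (\<Sum>s\<in>T1\<union>T2. (if s \<in> T2 then r2 s * s else 0))"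
    unfolding sum.distrib[symmetric] by (rule sum.cong) (auto simp: r_def distrib_right)
  also have "\<dots> = x + y" using 1 2 by (simp add: sum.inter_restrict[symmetric] Int_Un_eq)
  finally have e: "x + y = (\<Sum>s\<in>T1\<union>T2. r s * s)" ..
  have "\<forall>s\<in>T1\<union>T2. r s \<in> R" using 1 2 by (auto simp: r_def intro!: Radd R0)
  then show "x + y \<in> rspan R S" unfolding rspan_def using e 1 2 by blast
next
  fix c x assume c: "c \<in> R" and "x \<in> rspan R S"
  then obtain r1 T1 where 1: "x = (\<Sum>s\<in>T1. r1 s * s)" "finite T1" "T1 \<subseteq> S" "\<forall>s\<in>T1. r1 s \<in> R"
    unfolding rspan_def by blast
  have "c * x = (\<Sum>s\<in>T1. (c * r1 s) * s)" using 1 by (simp add: sum_distrib_left mult.assoc)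
  moreover have "\<forall>s\<in>T1. c * r1 s \<in> R" using 1 c by (auto intro: Rmul)
  ultimately show "c * x \<in> rspan R S" unfolding rspan_def using 1
    by (intro CollectI exI[of _ "\<lambda>s. c * r1 s"] exI[of _ T1]) auto
qed

lemma span_least: assumes "rsubmodule R E" "S \<subseteq> E" shows "rspan R S \<subseteq> E"
proof
  fix x assume "x \<in> rspan R S"
  then obtain r1 T1 where 1: "x = (\<Sum>s\<in>T1. r1 s * s)" "finite T1" "T1 \<subseteq> S" "\<forall>s\<in>T1. r1 s \<in> R"
    unfolding rspan_def by blast
  show "x \<in> E" unfolding 1(1) using 1 assms
    by (intro mod_sum) (auto simp: rsubmodule_def)
qed

lemma span_mono: "S \<subseteq> T \<Longrightarrow> rspan R S \<subseteq> rspan R T"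
  by (meson span_least span_mod span_sub subset_iff)

lemma span_idem: "rsubmodule R E \<Longrightarrow> rspan R E = E"
  using span_least span_sub by blast

lemma mod0: "rsubmodule R E \<Longrightarrow> 0 \<in> E" by (simp add: rsubmodule_def)
lemma modadd: "rsubmodule R E \<Longrightarrow> x \<in> E \<Longrightarrow> y \<in> E \<Longrightarrow> x + y \<in> E" by (simp add: rsubmodule_def)
lemma modsmul: "rsubmodule R E \<Longrightarrow> r \<in> R \<Longrightarrow> x \<in> E \<Longrightarrow> r * x \<in> E" by (simp add: rsubmodule_def)
lemma modneg: "rsubmodule R E \<Longrightarrow> x \<in> E \<Longrightarrow> - x \<in> E"
  using modsmul[of E "-1" x] Rneg[OF R1] by simp
lemma moddiff: "rsubmodule R E \<Longrightarrow> x \<in> E \<Longrightarrow> y \<in> E \<Longrightarrow> x - y \<in> E"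
  using modadd[of E x "-y"] modneg[of E y] by simp

lemma R_mod: "rsubmodule R R" unfolding rsubmodule_def by (auto intro: R0 Radd Rmul)
lemma zero_mod: "rsubmodule R {0}" unfolding rsubmodule_def by auto

lemma mul_span:
  assumes N: "rsubmodule R N" and g: "\<And>s t. s \<in> S \<Longrightarrow> t \<in> T \<Longrightarrow> s * t \<in> N"
    and x: "x \<in> rspan R S" and y: "y \<in> rspan R T"
  shows "x * y \<in> N"
proof -
  have m1: "rsubmodule R {x. x * t \<in> N}" if "t \<in> T" for t
    using N unfolding rsubmodule_def by (auto simp: distrib_right mult.assoc)
  have "\<forall>t\<in>T. x * t \<in> N"
    using span_least[OF m1] g x by blast
  then have "rspan R T \<subseteq> {y. x * y \<in> N}"
    by (intro span_least) (use N in \<open>auto simp: rsubmodule_def distrib_left mult.left_commute\<close>)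
  then show ?thesis using y by blast
qed

lemma mmul_mod: "rsubmodule R (mmul R E F)" unfolding mmul_def by (rule span_mod)
lemma mmul_mem: "e \<in> E \<Longrightarrow> f \<in> F \<Longrightarrow> e * f \<in> mmul R E F"
  unfolding mmul_def by (rule span_sub) blast
lemma mmul_least: "rsubmodule R N \<Longrightarrow> (\<And>e f. e \<in> E \<Longrightarrow> f \<in> F \<Longrightarrow> e * f \<in> N) \<Longrightarrow> mmul R E F \<subseteq> N"
  unfolding mmul_def by (rule span_least) auto
lemma mmul_mono: "E \<subseteq> E' \<Longrightarrow> F \<subseteq> F' \<Longrightarrow> mmul R E F \<subseteq> mmul R E' F'"
  by (meson mmul_least mmul_mem mmul_mod subsetD)
lemma mmul_comm: "mmul R E F = mmul R F E"
  unfolding mmul_def by (rule arg_cong[where f="rspan R"]) (auto, (metis mult.commute)+)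

lemma mmul_span_least:
  assumes "rsubmodule R N" "\<And>s t. s \<in> S \<Longrightarrow> t \<in> T \<Longrightarrow> s * t \<in> N"
  shows "mmul R (rspan R S) (rspan R T) \<subseteq> N"
  by (rule mmul_least[OF assms(1)]) (rule mul_span[OF assms])

lemma mmul_assoc:
  assumes "rsubmodule R E" "rsubmodule R F" "rsubmodule R G"
  shows "mmul R (mmul R E F) G = mmul R E (mmul R F G)"
proof
  have "mmul R (mmul R E F) (rspan R G) \<subseteq> mmul R E (mmul R F G)"
    unfolding mmul_def[of R E F]
  proof (rule mmul_span_least[OF mmul_mod])
    fix s t assume s: "s \<in> {e * f |e f. e \<in> E \<and> f \<in> F}" and t: "t \<in> G"
    then obtain e f where "s = e * f" "e \<in> E" "f \<in> F" by blast
    then show "s * t \<in> mmul R E (mmul R F G)"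
      using mmul_mem[OF \<open>e \<in> E\<close> mmul_mem[OF \<open>f \<in> F\<close> t]] by (simp add: mult.assoc)
  qed
  then show "mmul R (mmul R E F) G \<subseteq> mmul R E (mmul R F G)"
    using span_idem[OF assms(3)] by simp
  have "mmul R (rspan R E) (mmul R F G) \<subseteq> mmul R (mmul R E F) G"
    unfolding mmul_def[of R F G]
  proof (rule mmul_span_least[OF mmul_mod])
    fix s t assume s: "s \<in> E" and t: "t \<in> {e * f |e f. e \<in> F \<and> f \<in> G}"
    then obtain e f where "t = e * f" "e \<in> F" "f \<in> G" by blast
    then show "s * t \<in> mmul R (mmul R E F) G"
      using mmul_mem[OF mmul_mem[OF s \<open>e \<in> F\<close>] \<open>f \<in> G\<close>] by (simp add: mult.assoc)
  qed
  then show "mmul R E (mmul R F G) \<subseteq> mmul R (mmul R E F) G"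
    using span_idem[OF assms(1)] by simp
qed

lemma mmul_R: "rsubmodule R E \<Longrightarrow> mmul R R E = E"
  apply (rule antisym)
   apply (rule mmul_least, assumption, simp add: modsmul)
  using mmul_mem[of 1 R _ E] R1 by auto

lemma mmul_zero: "mmul R {0} E = {0}"
  apply (rule antisym)
   apply (rule mmul_least[OF zero_mod], simp)
  using mmul_mod mod0 by blast

definition sm where "sm E F = rspan R (E \<union> F)"

lemma sm_mod: "rsubmodule R (sm E F)" unfolding sm_def by (rule span_mod)
lemma sm_l: "E \<subseteq> sm E F" and sm_r: "F \<subseteq> sm E F" unfolding sm_def using span_sub by blast+
lemma sm_least: "rsubmodule R N \<Longrightarrow> E \<subseteq> N \<Longrightarrow> F \<subseteq> N \<Longrightarrow> sm E F \<subseteq> N"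
  unfolding sm_def by (rule span_least) auto
lemma sm_mono: "E \<subseteq> E' \<Longrightarrow> F \<subseteq> F' \<Longrightarrow> sm E F \<subseteq> sm E' F'"
  unfolding sm_def by (rule span_mono) auto

lemma mmul_distrib: "mmul R E (sm F G) \<subseteq> sm (mmul R E F) (mmul R E G)"
proof (rule mmul_least[OF sm_mod])
  fix e x assume e: "e \<in> E" and x: "x \<in> sm F G"
  have "e * x \<in> sm (mmul R E F) (mmul R E G)"
    apply (rule mul_span[OF sm_mod, of "{e}" "F \<union> G"])
    using e x unfolding sm_def
    by (auto intro: span_sub mmul_mem)
  then show "e * x \<in> sm (mmul R E F) (mmul R E G)" .
qed

lemma mmul_distrib2: "mmul R (sm F G) E \<subseteq> sm (mmul R F E) (mmul R G E)"
  using mmul_distrib[of E F G] by (simp add: mmul_comm)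

lemma mpow_0: "mpow R E 0 = R" by (simp add: mpow_def)
lemma mpow_Suc: "mpow R E (Suc n) = mmul R E (mpow R E n)" by (simp add: mpow_def)
lemma mpow_mod: "rsubmodule R (mpow R E n)"
  by (cases n) (simp_all add: mpow_0 mpow_Suc R_mod mmul_mod)
lemma mpow_mono: "E \<subseteq> E' \<Longrightarrow> mpow R E n \<subseteq> mpow R E' n"
  by (induction n) (simp_all add: mpow_0 mpow_Suc mmul_mono)

end

definition supp :: "('m \<Rightarrow> 'k::zero) \<Rightarrow> 'm set" where "supp F = {u. F u \<noteq> 0}"

definition conv :: "('m::plus \<Rightarrow> 'k::comm_ring) \<Rightarrow> ('m \<Rightarrow> 'k) \<Rightarrow> 'm \<Rightarrow> 'k" where
  "conv F G m = (\<Sum>u\<in>supp F. \<Sum>v\<in>supp G. if u + v = m then F u * G v else 0)"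

definition UPP :: "'m::plus set \<Rightarrow> bool" where
  "UPP D \<longleftrightarrow> (\<forall>S T. finite S \<and> finite T \<and> S \<noteq> {} \<and> T \<noteq> {} \<and> S \<subseteq> D \<and> T \<subseteq> D \<longrightarrow>
     (\<exists>u\<in>S. \<exists>v\<in>T. \<forall>u'\<in>S. \<forall>v'\<in>T. u' + v' = u + v \<longrightarrow> u' = u \<and> v' = v))"

lemma supp_upd: "supp (F(u:=0)) = supp F - {u}" by (auto simp: supp_def)

lemma conv_split1:
  assumes "u \<in> supp F" "finite (supp F)"
  shows "conv F G m = conv (F(u:=0)) G m + F u * (\<Sum>v\<in>supp G. if u + v = m then G v else 0)"
proof -
  have e1: "conv F G m = (\<Sum>v\<in>supp G. if u + v = m then F u * G v else 0) +
     (\<Sum>w\<in>supp F - {u}. \<Sum>v\<in>supp G. if w + v = m then F w * G v else 0)"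
    unfolding conv_def using assms by (simp add: sum.remove)
  have e2: "(\<Sum>w\<in>supp F - {u}. \<Sum>v\<in>supp G. if w + v = m then F w * G v else 0) = conv (F(u:=0)) G m"
    unfolding conv_def supp_upd by (intro sum.cong) auto
  have e3: "(\<Sum>v\<in>supp G. if u + v = m then F u * G v else 0) = F u * (\<Sum>v\<in>supp G. if u + v = m then G v else 0)"
    by (subst sum_distrib_left) (rule sum.cong; simp)
  show ?thesis by (simp only: e1 e2 e3) (rule add.commute)
qed

lemma conv_split2:
  assumes "v \<in> supp G" "finite (supp G)"
  shows "conv F G m = conv F (G(v:=0)) m + G v * (\<Sum>u\<in>supp F. if u + v = m then F u else 0)"
proof -
  have e1: "conv F G m = (\<Sum>u\<in>supp F. (if u + v = m then F u * G v else 0) +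
     (\<Sum>w\<in>supp G - {v}. if u + w = m then F u * G w else 0))"
    unfolding conv_def using assms by (intro sum.cong) (simp_all add: sum.remove)
  have e2: "(\<Sum>u\<in>supp F. (if u + v = m then F u * G v else 0) +
     (\<Sum>w\<in>supp G - {v}. if u + w = m then F u * G w else 0)) = (\<Sum>u\<in>supp F. if u + v = m then F u * G v else 0) + conv F (G(v:=0)) m"
    unfolding conv_def supp_upd sum.distrib by (intro arg_cong2[where f="(+)"] sum.cong) auto
  have e3: "(\<Sum>u\<in>supp F. if u + v = m then F u * G v else 0) = G v * (\<Sum>u\<in>supp F. if u + v = m then F u else 0)"
    by (subst sum_distrib_left) (rule sum.cong; simp add: mult.commute)
  show ?thesis by (simp only: e1 e2 e3) (rule add.commute)
qed

lemma conv_top: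
  assumes "u \<in> supp F" "v \<in> supp G"
    and uniq: "\<forall>u'\<in>supp F. \<forall>v'\<in>supp G. u' + v' = u + v \<longrightarrow> u' = u \<and> v' = v"
    and "finite (supp F)" "finite (supp G)"
  shows "conv F G (u + v) = F u * G v"
proof -
  have "conv F G (u + v) = (\<Sum>u'\<in>supp F. \<Sum>v'\<in>supp G. if u' = u \<and> v' = v then F u' * G v' else 0)"
    unfolding conv_def using uniq by (intro sum.cong refl) auto
  also have "\<dots> = (\<Sum>u'\<in>supp F. if u' = u then F u * G v else 0)"
    using assms by (intro sum.cong refl) (auto simp: sum.delta' if_distrib cong: if_cong)
  also have "\<dots> = F u * G v" using assms by (simp add: sum.delta')
  finally show ?thesis .
qed

definition cont :: "'k::field set \<Rightarrow> ('m \<Rightarrow> 'k) \<Rightarrow> 'k set" where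
  "cont R F = rspan R (range F)"

context sr begin

lemmas mods[simp] = span_mod mmul_mod mpow_mod sm_mod

lemma cont_mod[simp]: "rsubmodule R (cont R F)" unfolding cont_def by simp

lemma mmul_lcomm:
  "rsubmodule R E \<Longrightarrow> rsubmodule R F \<Longrightarrow> rsubmodule R G \<Longrightarrow> mmul R E (mmul R F G) = mmul R F (mmul R E G)"
  by (metis mmul_assoc mmul_comm)

lemmas mmul_ac = mmul_comm mmul_assoc mmul_lcomm

lemma cont_mem: "F x \<in> cont R F" unfolding cont_def by (rule span_sub) simp

lemma cont_zero: "supp F = {} \<Longrightarrow> cont R F = {0}"
proof -
  assume "supp F = {}" then have "range F = {0}" by (auto simp: supp_def)
  then show ?thesis unfolding cont_def using span_idem[OF zero_mod] by simp
qed

lemma mmul_zero2: "mmul R E {0} = {0}" using mmul_zero mmul_comm by metis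

lemma pow_split:
  assumes A': "rsubmodule R A'" and sub: "A' \<subseteq> A" and aA: "a \<in> A" and A: "rsubmodule R A"
    and Asub: "A \<subseteq> sm A' (rspan R {a})"
  shows "mpow R A (Suc k) \<subseteq> sm (mpow R A' (Suc k)) (mmul R (rspan R {a}) (mpow R A k))"
proof (induction k)
  case 0
  then show ?case using Asub A A' by (simp add: mpow_0 mpow_Suc mmul_comm[of _ R] mmul_R)
next
  case (Suc k)
  let ?a = "rspan R {a}"
  have ra: "?a \<subseteq> A" using aA A by (simp add: span_least)
  have "mpow R A (Suc (Suc k)) \<subseteq> mmul R A (sm (mpow R A' (Suc k)) (mmul R ?a (mpow R A k)))"
    unfolding mpow_Suc[of _ "Suc k"] by (rule mmul_mono[OF order_refl Suc.IH])
  also have "\<dots> \<subseteq> sm (mmul R A (mpow R A' (Suc k))) (mmul R A (mmul R ?a (mpow R A k)))"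
    by (rule mmul_distrib)
  finally have c1: "mpow R A (Suc (Suc k)) \<subseteq> sm (mmul R A (mpow R A' (Suc k))) (mmul R A (mmul R ?a (mpow R A k)))" .
  have c2: "mmul R A (mpow R A' (Suc k)) \<subseteq> sm (mpow R A' (Suc (Suc k))) (mmul R ?a (mpow R A (Suc k)))"
  proof -
    have "mmul R A (mpow R A' (Suc k)) \<subseteq> mmul R (sm A' ?a) (mpow R A' (Suc k))"
      by (rule mmul_mono[OF Asub order_refl])
    also have "\<dots> \<subseteq> sm (mmul R A' (mpow R A' (Suc k))) (mmul R ?a (mpow R A' (Suc k)))"
      by (rule mmul_distrib2)
    also have "\<dots> \<subseteq> sm (mpow R A' (Suc (Suc k))) (mmul R ?a (mpow R A (Suc k)))"
      by (intro sm_mono mmul_mono mpow_mono sub order_refl) (simp add: mpow_Suc)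
    finally show ?thesis .
  qed
  have c3: "mmul R A (mmul R ?a (mpow R A k)) = mmul R ?a (mpow R A (Suc k))"
    using A by (simp add: mpow_Suc mmul_lcomm)
  show ?case
    by (rule order_trans[OF c1], rule sm_least[OF sm_mod c2]) (simp add: c3 sm_r)
qed

end

context sr begin

lemma DM:
  assumes U: "UPP D"
  shows "finite (supp F) \<Longrightarrow> finite (supp G) \<Longrightarrow> supp F \<subseteq> D \<Longrightarrow> supp G \<subseteq> D \<Longrightarrow> supp G \<noteq> {} \<Longrightarrow>
    mmul R (mpow R (cont R F) (card (supp G))) (cont R G)
      \<subseteq> mmul R (mpow R (cont R F) (card (supp G) - 1)) (cont R (conv F G))"
proof (induction "card (supp F) + card (supp G)" arbitrary: F G rule: less_induct)
  case less
  obtain t where st: "card (supp G) = Suc t"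
    using less.prems by (metis card_gt_0_iff gr0_implies_Suc)
  show ?case
  proof (cases "supp F = {}")
    case True
    then have "mpow R (cont R F) (card (supp G)) = {0}"
      by (simp add: st mpow_Suc cont_zero mmul_zero)
    then show ?thesis by (simp add: mmul_zero mod0)
  next
    case False
    from U[unfolded UPP_def, rule_format, of "supp F" "supp G"] less.prems False
    obtain u v where u: "u \<in> supp F" and v: "v \<in> supp G"
      and uniq: "\<forall>u'\<in>supp F. \<forall>v'\<in>supp G. u' + v' = u + v \<longrightarrow> u' = u \<and> v' = v" by blast
    define a where "a = F u"
    define b where "b = G v"
    define F' where "F' = F(u:=0)"
    define G' where "G' = G(v:=0)"
    define A where "A = cont R F"
    define A' where "A' = cont R F'"
    define B where "B = cont R G"
    define B' where "B' = cont R G'"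
    define C where "C = cont R (conv F G)"
    let ?a = "rspan R {a}" and ?b = "rspan R {b}"
    let ?P = "mpow R A t"
    have ha: "a \<in> ?a" and hb: "b \<in> ?b" by (rule span_sub, simp)+
    have [simp]: "rsubmodule R A" "rsubmodule R A'" "rsubmodule R B" "rsubmodule R B'" "rsubmodule R C"
      by (simp_all add: A_def A'_def B_def B'_def C_def)
    have sF': "supp F' = supp F - {u}" and sG': "supp G' = supp G - {v}"
      by (simp_all add: F'_def G'_def supp_upd)
    have hA'A: "A' \<subseteq> A" unfolding A'_def cont_def
      by (rule span_least) (auto simp: F'_def A_def cont_mem mod0)
    have haA: "a \<in> A" by (simp add: a_def A_def cont_mem)
    have hAsub: "A \<subseteq> sm A' ?a" unfolding A_def cont_def
    proof (rule span_least[OF sm_mod], safe)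
      fix x show "F x \<in> sm A' ?a"
      proof (cases "x = u")
        case True then show ?thesis using sm_r[of ?a A'] span_sub[of a "{a}"] by (auto simp: a_def)
      next
        case False then have "F x = F' x" by (simp add: F'_def)
        then show ?thesis using sm_l[of A' ?a] cont_mem[of F' x] by (auto simp: A'_def)
      qed
    qed
    have hbB: "b \<in> B" by (simp add: b_def B_def cont_mem)
    have hBsub: "B \<subseteq> sm B' ?b" unfolding B_def cont_def
    proof (rule span_least[OF sm_mod], safe)
      fix x show "G x \<in> sm B' ?b"
      proof (cases "x = v")
        case True then show ?thesis using sm_r[of ?b B'] span_sub[of b "{b}"] by (auto simp: b_def)
      next
        case False then have "G x = G' x" by (simp add: G'_def)
        then show ?thesis using sm_l[of B' ?b] cont_mem[of G' x] by (auto simp: B'_def)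
      qed
    qed
    have hab: "a * b \<in> C"
      using conv_top[OF u v uniq less.prems(1,2)] cont_mem[of "conv F G" "u+v"]
      by (simp add: a_def b_def C_def)
    have hC1: "cont R (conv F' G) \<subseteq> sm C (mmul R ?a B)" unfolding cont_def
    proof (rule span_least[OF sm_mod], safe)
      fix m
      have e: "conv F' G m = conv F G m - a * (\<Sum>v\<in>supp G. if u + v = m then G v else 0)"
        using conv_split1[OF u less.prems(1), of G m] by (simp add: F'_def a_def)
      have sB: "(\<Sum>v\<in>supp G. if u + v = m then G v else 0) \<in> B"
        by (rule mod_sum) (auto simp: B_def cont_mem mod0 less.prems)
      have "a * (\<Sum>v\<in>supp G. if u + v = m then G v else 0) \<in> sm C (mmul R ?a B)"
        using sm_r[of "mmul R ?a B" C] mmul_mem[OF ha sB] by auto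
      moreover have "conv F G m \<in> sm C (mmul R ?a B)"
        using sm_l[of C "mmul R ?a B"] cont_mem[of "conv F G" m] by (auto simp: C_def)
      ultimately show "conv F' G m \<in> sm C (mmul R ?a B)" unfolding e by (simp add: moddiff)
    qed
    have hC2: "cont R (conv F G') \<subseteq> sm C (mmul R ?b A)" unfolding cont_def
    proof (rule span_least[OF sm_mod], safe)
      fix m
      have e: "conv F G' m = conv F G m - b * (\<Sum>u\<in>supp F. if u + v = m then F u else 0)"
        using conv_split2[OF v less.prems(2), of F m] by (simp add: G'_def b_def)
      have sB: "(\<Sum>u\<in>supp F. if u + v = m then F u else 0) \<in> A"
        by (rule mod_sum) (auto simp: A_def cont_mem mod0 less.prems)
      have "b * (\<Sum>u\<in>supp F. if u + v = m then F u else 0) \<in> sm C (mmul R ?b A)"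
        using sm_r[of "mmul R ?b A" C] mmul_mem[OF hb sB] by auto
      moreover have "conv F G m \<in> sm C (mmul R ?b A)"
        using sm_l[of C "mmul R ?b A"] cont_mem[of "conv F G" m] by (auto simp: C_def)
      ultimately show "conv F G' m \<in> sm C (mmul R ?b A)" unfolding e by (simp add: moddiff)
    qed
    have IH1: "mmul R (mpow R A' (Suc t)) B \<subseteq> mmul R (mpow R A' t) (cont R (conv F' G))"
    proof -
      have "card (supp F') < card (supp F)"
        by (simp only: sF') (rule card_Diff1_less[OF less.prems(1) u])
      then show ?thesis
        using less.hyps[of F' G] less.prems sF' st by (auto simp: A'_def B_def)
    qed
    have ab_C: "mmul R ?a ?b \<subseteq> C"
      by (rule mmul_span_least) (auto simp: hab)
    have M: "mmul R (mmul R ?a ?P) B \<subseteq> mmul R ?P C"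
    proof -
      have "mmul R (mmul R ?a ?P) B \<subseteq> mmul R (mmul R ?a ?P) (sm B' ?b)"
        by (rule mmul_mono[OF order_refl hBsub])
      also have "\<dots> \<subseteq> sm (mmul R (mmul R ?a ?P) B') (mmul R (mmul R ?a ?P) ?b)"
        by (rule mmul_distrib)
      also have "\<dots> \<subseteq> mmul R ?P C"
      proof (rule sm_least[OF mmul_mod])
        have "mmul R (mmul R ?a ?P) ?b = mmul R ?P (mmul R ?a ?b)" by (simp add: mmul_ac)
        also have "\<dots> \<subseteq> mmul R ?P C" by (rule mmul_mono[OF order_refl ab_C])
        finally show "mmul R (mmul R ?a ?P) ?b \<subseteq> mmul R ?P C" .
      next
        show "mmul R (mmul R ?a ?P) B' \<subseteq> mmul R ?P C"
        proof (cases t)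
          case 0
          then have "supp G' = {}" using sG' st v less.prems
            by (metis card_1_singletonE One_nat_def Diff_cancel singletonD)
          then have "B' = {0}" by (simp add: B'_def cont_zero)
          then show ?thesis by (simp add: mmul_zero2 mod0)
        next
          case (Suc t')
          have IH2: "mmul R ?P B' \<subseteq> mmul R (mpow R A t') (cont R (conv F G'))"
          proof -
            have lt: "card (supp G') < card (supp G)"
              by (simp only: sG') (rule card_Diff1_less[OF less.prems(2) v])
            have cG': "card (supp G') = Suc t'" using sG' v st Suc less.prems(2) by simp
            then have ne: "supp G' \<noteq> {}" by auto
            have fin: "finite (supp G')" "supp G' \<subseteq> D" using sG' less.prems by auto
            have "card (supp F) + card (supp G') < card (supp F) + card (supp G)" using lt by simp
            from less.hyps[OF this less.prems(1) fin(1) less.prems(3) fin(2) ne]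
            show ?thesis by (simp add: cG' Suc A_def B'_def)
          qed
          let ?P' = "mpow R A t'"
          have "mmul R (mmul R ?a ?P) B' = mmul R ?a (mmul R ?P B')" by (simp add: mmul_ac)
          also have "\<dots> \<subseteq> mmul R ?a (mmul R ?P' (sm C (mmul R ?b A)))"
            by (intro mmul_mono order_refl order_trans[OF IH2] hC2)
          also have "\<dots> \<subseteq> mmul R ?a (sm (mmul R ?P' C) (mmul R ?P' (mmul R ?b A)))"
            by (intro mmul_mono order_refl mmul_distrib)
          also have "\<dots> \<subseteq> sm (mmul R ?a (mmul R ?P' C)) (mmul R ?a (mmul R ?P' (mmul R ?b A)))"
            by (rule mmul_distrib)
          also have "\<dots> \<subseteq> mmul R ?P C"
          proof (rule sm_least[OF mmul_mod])
            have "mmul R ?a (mmul R ?P' C) = mmul R (mmul R ?a ?P') C" by (simp add: mmul_ac)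
            also have "\<dots> \<subseteq> mmul R (mmul R A ?P') C"
              by (intro mmul_mono order_refl span_least) (auto simp: haA)
            also have "\<dots> = mmul R ?P C" by (simp add: Suc mpow_Suc)
            finally show "mmul R ?a (mmul R ?P' C) \<subseteq> mmul R ?P C" .
          next
            have "mmul R ?a (mmul R ?P' (mmul R ?b A)) = mmul R (mmul R ?a ?b) (mmul R A ?P')"
              by (simp add: mmul_ac)
            also have "\<dots> \<subseteq> mmul R C (mmul R A ?P')" by (rule mmul_mono[OF ab_C order_refl])
            also have "\<dots> = mmul R ?P C" by (simp add: Suc mpow_Suc mmul_comm)
            finally show "mmul R ?a (mmul R ?P' (mmul R ?b A)) \<subseteq> mmul R ?P C" .
          qed
          finally show ?thesis .
        qed
      qed
      finally show ?thesis .
    qed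
    have "mmul R (mpow R A (Suc t)) B \<subseteq> mmul R (sm (mpow R A' (Suc t)) (mmul R ?a ?P)) B"
      by (rule mmul_mono[OF pow_split order_refl]) (simp_all add: hA'A haA hAsub)
    also have "\<dots> \<subseteq> sm (mmul R (mpow R A' (Suc t)) B) (mmul R (mmul R ?a ?P) B)"
      by (rule mmul_distrib2)
    also have "\<dots> \<subseteq> mmul R ?P C"
    proof (rule sm_least[OF mmul_mod _ M])
      have "mmul R (mpow R A' (Suc t)) B \<subseteq> mmul R ?P (sm C (mmul R ?a B))"
        by (rule order_trans[OF IH1 mmul_mono[OF mpow_mono[OF hA'A] hC1]])
      also have "\<dots> \<subseteq> sm (mmul R ?P C) (mmul R ?P (mmul R ?a B))" by (rule mmul_distrib)
      also have "\<dots> \<subseteq> mmul R ?P C"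
      proof (rule sm_least[OF mmul_mod order_refl])
        have "mmul R ?P (mmul R ?a B) = mmul R (mmul R ?a ?P) B" by (simp add: mmul_ac)
        then show "mmul R ?P (mmul R ?a B) \<subseteq> mmul R ?P C" using M by simp
      qed
      finally show "mmul R (mpow R A' (Suc t)) B \<subseteq> mmul R ?P C" .
    qed
    finally show ?thesis by (simp add: st A_def B_def C_def)
  qed
qed

end

lemma nsmul_0[simp]: "nsmul 0 x = 0" by (simp add: nsmul_def)
lemma nsmul_Suc[simp]: "nsmul (Suc n) x = x + nsmul n x" by (simp add: nsmul_def)
lemma nsmul_neg: "nsmul n (-x) = - nsmul n x" by (induction n) simp_all
lemma nsmul_add_n: "nsmul (m + n) x = nsmul m x + nsmul n x" by (induction m) (simp_all add: add.assoc)
lemma nsmul_mult: "nsmul (m * n) x = nsmul m (nsmul n x)" by (induction m) (simp_all add: nsmul_add_n)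

locale tfg =
  fixes Q :: "'g::ab_group_add set"
  assumes Q0: "0 \<in> Q" and Qadd: "x \<in> Q \<Longrightarrow> y \<in> Q \<Longrightarrow> x + y \<in> Q"
    and Qneg: "x \<in> Q \<Longrightarrow> - x \<in> Q"
    and tf: "x \<in> Q \<Longrightarrow> n > 0 \<Longrightarrow> nsmul n x = 0 \<Longrightarrow> x = 0"
begin

definition cone where "cone P \<longleftrightarrow> P \<subseteq> Q \<and> (\<forall>x\<in>P. \<forall>y\<in>P. x + y \<in> P) \<and> 0 \<notin> P"

lemma nsmul_Q: "x \<in> Q \<Longrightarrow> nsmul n x \<in> Q" by (induction n) (auto intro: Q0 Qadd)

lemma cone_nsmul: "cone P \<Longrightarrow> x \<in> P \<Longrightarrow> nsmul (Suc n) x \<in> P"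
  by (induction n) (auto simp: cone_def)

definition ext where "ext P x = P \<union> {nsmul k x + p | k p. k > 0 \<and> (p \<in> P \<or> p = 0)}"

lemma ext_cone:
  assumes P: "cone P" and x: "x \<in> Q"
    and z: "\<And>k p. k > 0 \<Longrightarrow> p \<in> P \<or> p = 0 \<Longrightarrow> nsmul k x + p \<noteq> 0"
  shows "cone (ext P x)"
  unfolding cone_def
proof (intro conjI ballI)
  show "ext P x \<subseteq> Q" using P x unfolding ext_def cone_def by (auto intro!: Qadd nsmul_Q Q0)
  show "0 \<notin> ext P x" using P z unfolding ext_def cone_def by auto
next
  fix y w assume y: "y \<in> ext P x" and w: "w \<in> ext P x"
  have cl: "a \<in> P \<Longrightarrow> b \<in> P \<Longrightarrow> a + b \<in> P" for a b using P by (simp add: cone_def)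
  show "y + w \<in> ext P x"
  proof (cases "y \<in> P")
    case True
    then show ?thesis
    proof (cases "w \<in> P")
      case True then show ?thesis using \<open>y \<in> P\<close> cl by (simp add: ext_def)
    next
      case False
      then obtain k p where "w = nsmul k x + p" "k > 0" "p \<in> P \<or> p = 0" using w by (auto simp: ext_def)
      then show ?thesis using \<open>y \<in> P\<close> cl unfolding ext_def
        by (intro UnI2 CollectI exI[of _ k] exI[of _ "y + p"]) (auto simp: algebra_simps)
    qed
  next
    case False
    then obtain k p where kp: "y = nsmul k x + p" "k > 0" "p \<in> P \<or> p = 0" using y by (auto simp: ext_def)
    show ?thesis
    proof (cases "w \<in> P")
      case True then show ?thesis using kp cl unfolding ext_def
        by (intro UnI2 CollectI exI[of _ k] exI[of _ "p + w"]) (auto simp: algebra_simps)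
    next
      case False
      then obtain k' p' where "w = nsmul k' x + p'" "k' > 0" "p' \<in> P \<or> p' = 0" using w by (auto simp: ext_def)
      then show ?thesis using kp cl unfolding ext_def
        by (intro UnI2 CollectI exI[of _ "k + k'"] exI[of _ "p + p'"]) (auto simp: algebra_simps nsmul_add_n)
    qed
  qed
qed

lemma ext_x: "x \<in> ext P x"
  unfolding ext_def by (intro UnI2 CollectI exI[of _ 1] exI[of _ 0]) simp

lemma ext_sup: "P \<subseteq> ext P x" unfolding ext_def by auto

lemma exists_max_cone: "\<exists>M. cone M \<and> (\<forall>P. cone P \<and> M \<subseteq> P \<longrightarrow> P = M)"
proof -
  have "\<forall>C\<in>chains {P. cone P}. \<Union>C \<in> {P. cone P}"
  proof
    fix C assume C: "C \<in> chains {P. cone P}"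
    then have cc: "\<And>P. P \<in> C \<Longrightarrow> cone P" and ch: "chain\<^sub>\<subseteq> C" by (auto simp: chains_def)
    have "\<Union>C \<subseteq> Q" using cc by (auto simp: cone_def)
    moreover have "0 \<notin> \<Union>C" using cc by (auto simp: cone_def)
    moreover have "\<forall>x\<in>\<Union>C. \<forall>y\<in>\<Union>C. x + y \<in> \<Union>C"
    proof (intro ballI)
      fix x y assume "x \<in> \<Union>C" "y \<in> \<Union>C"
      then obtain P1 P2 where "x \<in> P1" "P1 \<in> C" "y \<in> P2" "P2 \<in> C" by blast
      with ch have "P1 \<subseteq> P2 \<or> P2 \<subseteq> P1" by (auto simp: chain_subset_def)
      then show "x + y \<in> \<Union>C"
        using cc[OF \<open>P1 \<in> C\<close>] cc[OF \<open>P2 \<in> C\<close>] \<open>x \<in> P1\<close> \<open>y \<in> P2\<close> \<open>P1 \<in> C\<close> \<open>P2 \<in> C\<close>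
        unfolding cone_def by blast
    qed
    ultimately show "\<Union>C \<in> {P. cone P}" by (simp add: cone_def)
  qed
  from Zorn_Lemma[OF this] show ?thesis by auto
qed

lemma max_cone_total:
  assumes M: "cone M" and mx: "\<forall>P. cone P \<and> M \<subseteq> P \<longrightarrow> P = M"
  shows "\<And>x. x \<in> Q \<Longrightarrow> x \<noteq> 0 \<Longrightarrow> x \<in> M \<or> - x \<in> M"
proof -
  have cl: "a \<in> M \<Longrightarrow> b \<in> M \<Longrightarrow> a + b \<in> M" for a b using M by (simp add: cone_def)
  have M0: "0 \<notin> M" and MQ: "M \<subseteq> Q" using M by (auto simp: cone_def)
  have pure: "x \<in> M" if x: "x \<in> Q" and n: "n > 0" and nx: "nsmul n x \<in> M" for x n
  proof (rule ccontr)
    assume xM: "x \<notin> M"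
    have "cone (ext M x)"
    proof (rule ext_cone[OF M x])
      fix k p assume k: "k > (0::nat)" and p: "p \<in> M \<or> p = 0"
      show "nsmul k x + p \<noteq> 0"
      proof
        assume e: "nsmul k x + p = 0"
        show False
        proof (cases "p = 0")
          case True
          then have "x = 0" using e tf[OF x k] by simp
          then show False using nx M0 by (induction n) auto
        next
          case False
          then have pM: "p \<in> M" using p by simp
          have "p = nsmul k (-x)" using e by (simp add: nsmul_neg eq_neg_iff_add_eq_0 add.commute)
          obtain n' where n': "n = Suc n'" using n gr0_implies_Suc by blast
          obtain k' where k': "k = Suc k'" using k gr0_implies_Suc by blast
          have a1: "nsmul n p \<in> M" using cone_nsmul[OF M pM] n' by simp
          have a2: "nsmul k (nsmul n x) \<in> M" using cone_nsmul[OF M nx] k' by simp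
          have "nsmul n p + nsmul k (nsmul n x) = 0"
            unfolding \<open>p = _\<close> nsmul_mult[symmetric] nsmul_neg by (simp add: mult.commute)
          then show False using cl[OF a1 a2] M0 by simp
        qed
      qed
    qed
    then have "ext M x = M" using mx ext_sup by blast
    then show False using ext_x[of x M] xM by simp
  qed
  fix x assume x: "x \<in> Q" and x0: "x \<noteq> 0"
  show "x \<in> M \<or> - x \<in> M"
  proof (rule ccontr)
    assume nn: "\<not> (x \<in> M \<or> - x \<in> M)"
    have "cone (ext M x)"
    proof (rule ext_cone[OF M x])
      fix k p assume k: "k > (0::nat)" and p: "p \<in> M \<or> p = 0"
      show "nsmul k x + p \<noteq> 0"
      proof
        assume e: "nsmul k x + p = 0"
        show False
        proof (cases "p = 0")
          case True
          then show False using e tf[OF x k] x0 by simp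
        next
          case False
          then have pM: "p \<in> M" using p by simp
          have "p = nsmul k (-x)" using e by (simp add: nsmul_neg eq_neg_iff_add_eq_0 add.commute)
          then have "- x \<in> M" using pure[OF Qneg[OF x] k] pM by simp
          then show False using nn by simp
        qed
      qed
    qed
    then have "ext M x = M" using mx ext_sup by blast
    then show False using ext_x[of x M] nn by simp
  qed
qed

lemma exists_order: "\<exists>P. P \<subseteq> Q \<and> (\<forall>x\<in>P. \<forall>y\<in>P. x + y \<in> P) \<and> 0 \<notin> P \<and>
   (\<forall>x\<in>Q. x \<noteq> 0 \<longrightarrow> x \<in> P \<or> - x \<in> P)"
proof -
  obtain M where "cone M" "\<forall>P. cone P \<and> M \<subseteq> P \<longrightarrow> P = M" using exists_max_cone by blast
  with max_cone_total[OF this] show ?thesis unfolding cone_def by blast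
qed

lemma UPP_prod: "UPP (UNIV \<times> Q :: (nat \<times> 'g) set)"
proof -
  obtain P where PQ: "P \<subseteq> Q" and cl: "\<forall>x\<in>P. \<forall>y\<in>P. x + y \<in> P" and P0: "0 \<notin> P"
    and tot: "\<forall>x\<in>Q. x \<noteq> 0 \<longrightarrow> x \<in> P \<or> - x \<in> P"
    using exists_order by blast
  have mx: "\<exists>m\<in>S. \<forall>s\<in>S. s = m \<or> m - s \<in> P" if "finite S" "S \<noteq> {}" "S \<subseteq> Q" for S
    using that
  proof (induction S rule: finite_ne_induct)
    case (singleton x) then show ?case by simp
  next
    case (insert x F)
    then obtain m where m: "m \<in> F" "\<forall>s\<in>F. s = m \<or> m - s \<in> P" by auto
    have xQ: "x \<in> Q" and mQ: "m \<in> Q" using insert m by auto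
    have "x - m \<in> Q" using Qadd[OF xQ Qneg[OF mQ]] by simp
    show ?case
    proof (cases "x - m \<in> P")
      case True
      have "\<forall>s\<in>insert x F. s = x \<or> x - s \<in> P"
      proof
        fix s assume "s \<in> insert x F"
        then consider "s = x" | "s = m" | "s \<in> F" "m - s \<in> P" using m by auto
        then show "s = x \<or> x - s \<in> P"
        proof cases
          case 3 then have "(x - m) + (m - s) \<in> P" using cl True by blast
          then show ?thesis by simp
        qed (use True in auto)
      qed
      then show ?thesis by auto
    next
      case False
      then have "x = m \<or> m - x \<in> P" using tot \<open>x - m \<in> Q\<close> by (metis minus_diff_eq eq_iff_diff_eq_0)
      then show ?thesis using m by auto
    qed
  qed
  show ?thesis unfolding UPP_def
  proof (intro allI impI)
    fix S T :: "(nat \<times> 'g) set"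
    assume a: "finite S \<and> finite T \<and> S \<noteq> {} \<and> T \<noteq> {} \<and> S \<subseteq> UNIV \<times> Q \<and> T \<subseteq> UNIV \<times> Q"
    define i0 where "i0 = Max (fst ` S)"
    define j0 where "j0 = Max (fst ` T)"
    have i0S: "i0 \<in> fst ` S" and j0T: "j0 \<in> fst ` T" using a by (simp_all add: i0_def j0_def)
    have iS: "\<And>i g. (i, g) \<in> S \<Longrightarrow> i \<le> i0" using a unfolding i0_def
      by (metis Max_ge finite_imageI fst_conv image_eqI)
    have jT: "\<And>i g. (i, g) \<in> T \<Longrightarrow> i \<le> j0" using a unfolding j0_def
      by (metis Max_ge finite_imageI fst_conv image_eqI)
    define S0 where "S0 = {g. (i0, g) \<in> S}"
    define T0 where "T0 = {g. (j0, g) \<in> T}"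
    have "finite S0"
    proof -
      have "S0 = snd ` (S \<inter> {p. fst p = i0})" unfolding S0_def by force
      then show ?thesis using a by simp
    qed
    moreover have "S0 \<noteq> {}" using i0S by (force simp: S0_def)
    moreover have "S0 \<subseteq> Q" using a by (auto simp: S0_def)
    ultimately obtain g0 where g0: "g0 \<in> S0" "\<forall>s\<in>S0. s = g0 \<or> g0 - s \<in> P" using mx by blast
    have "finite T0"
    proof -
      have "T0 = snd ` (T \<inter> {p. fst p = j0})" unfolding T0_def by force
      then show ?thesis using a by simp
    qed
    moreover have "T0 \<noteq> {}" using j0T by (force simp: T0_def)
    moreover have "T0 \<subseteq> Q" using a by (auto simp: T0_def)
    ultimately obtain h0 where h0: "h0 \<in> T0" "\<forall>s\<in>T0. s = h0 \<or> h0 - s \<in> P" using mx by blast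
    show "\<exists>u\<in>S. \<exists>v\<in>T. \<forall>u'\<in>S. \<forall>v'\<in>T. u' + v' = u + v \<longrightarrow> u' = u \<and> v' = v"
    proof (intro bexI ballI impI)
      fix u' v' assume u': "u' \<in> S" and v': "v' \<in> T" and e: "u' + v' = (i0, g0) + (j0, h0)"
      obtain i g where [simp]: "u' = (i, g)" by force
      obtain j h where [simp]: "v' = (j, h)" by force
      have "i + j = i0 + j0" "g + h = g0 + h0" using e by simp_all
      moreover have "i \<le> i0" "j \<le> j0" using iS jT u' v' by auto
      ultimately have ii: "i = i0" "j = j0" by auto
      then have "g \<in> S0" "h \<in> T0" using u' v' by (auto simp: S0_def T0_def)
      then have gg: "g = g0 \<or> g0 - g \<in> P" and hh: "h = h0 \<or> h0 - h \<in> P" using g0 h0 by auto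
      have sum0: "(g0 - g) + (h0 - h) = 0" using \<open>g + h = g0 + h0\<close> by (simp add: algebra_simps)
      have "g = g0 \<and> h = h0"
      proof (rule ccontr)
        assume "\<not> (g = g0 \<and> h = h0)"
        then have "(g0 - g) + (h0 - h) \<in> P" using gg hh cl by auto
        then show False using sum0 P0 by simp
      qed
      then show "u' = (i0, g0) \<and> v' = (j0, h0)" using ii by simp
    qed (use g0 h0 in \<open>auto simp: S0_def T0_def\<close>)
  qed
qed

end

locale gd =
  fixes \<Gamma> :: "'g::ab_group_add set" and Rg :: "'g \<Rightarrow> 'k::field set" and R :: "'k set"
  assumes gdom: "graded_domain \<Gamma> Rg R"
begin

lemma subR: "subring_of R" using gdom unfolding graded_domain_def quotient_field_of_def by blast

sublocale sr R by (rule sr.intro[OF subR])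

lemma Rg0: "0 \<in> Rg a" and Rgadd: "x \<in> Rg a \<Longrightarrow> y \<in> Rg a \<Longrightarrow> x + y \<in> Rg a"
  and Rgneg: "x \<in> Rg a \<Longrightarrow> - x \<in> Rg a"
  and RgG: "a \<notin> \<Gamma> \<Longrightarrow> Rg a = {0}"
  and Rgmul: "x \<in> Rg a \<Longrightarrow> y \<in> Rg b \<Longrightarrow> x * y \<in> Rg (a + b)"
  and Rdef: "R = {sum w S | w S. finite S \<and> (\<forall>\<alpha>\<in>S. w \<alpha> \<in> Rg \<alpha>)}"
  and Runiq: "finite S \<Longrightarrow> (\<forall>\<alpha>\<in>S. w \<alpha> \<in> Rg \<alpha>) \<Longrightarrow> sum w S = 0 \<Longrightarrow> \<alpha> \<in> S \<Longrightarrow> w \<alpha> = 0"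
  and Gam0: "0 \<in> \<Gamma>" and Gamadd: "a \<in> \<Gamma> \<Longrightarrow> b \<in> \<Gamma> \<Longrightarrow> a + b \<in> \<Gamma>"
  and tfree: "torsion_free_set (quot_group \<Gamma>)"
proof -
  note g = gdom[unfolded graded_domain_def submonoid_add_def]
  show "0 \<in> Rg a" using g by simp
  show "x \<in> Rg a \<Longrightarrow> y \<in> Rg a \<Longrightarrow> x + y \<in> Rg a" using g by simp
  show "x \<in> Rg a \<Longrightarrow> - x \<in> Rg a" using g by simp
  show "a \<notin> \<Gamma> \<Longrightarrow> Rg a = {0}" using g by simp
  show "x \<in> Rg a \<Longrightarrow> y \<in> Rg b \<Longrightarrow> x * y \<in> Rg (a + b)" using g by simp
  show "R = {sum w S | w S. finite S \<and> (\<forall>\<alpha>\<in>S. w \<alpha> \<in> Rg \<alpha>)}" using g by (elim conjE)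
  show "finite S \<Longrightarrow> (\<forall>\<alpha>\<in>S. w \<alpha> \<in> Rg \<alpha>) \<Longrightarrow> sum w S = 0 \<Longrightarrow> \<alpha> \<in> S \<Longrightarrow> w \<alpha> = 0"
    using g by blast
  show "0 \<in> \<Gamma>" using g by simp
  show "a \<in> \<Gamma> \<Longrightarrow> b \<in> \<Gamma> \<Longrightarrow> a + b \<in> \<Gamma>" using g by simp
  show "torsion_free_set (quot_group \<Gamma>)" using g by simp
qed

lemma RgR: "x \<in> Rg a \<Longrightarrow> x \<in> R"
  by (subst Rdef) (rule CollectI, rule exI[of _ "\<lambda>_. x"], rule exI[of _ "{a}"], simp)

lemma Rg_sum: "finite I \<Longrightarrow> (\<And>i. i \<in> I \<Longrightarrow> h i \<in> Rg a) \<Longrightarrow> sum h I \<in> Rg a"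
  by (induction I rule: finite_induct) (auto intro: Rg0 Rgadd)

lemma Runiq_shift:
  assumes S: "finite S" and v: "\<And>a. a \<in> S \<Longrightarrow> v a \<in> Rg (c + a)" and s0: "sum v S = 0" and a: "a \<in> S"
  shows "v a = 0"
proof -
  define z where "z d = v (d - c)" for d
  have inj: "inj_on ((+) c) S" by (auto simp: inj_on_def)
  have "sum z ((+) c ` S) = sum (z \<circ> (+) c) S" by (rule sum.reindex[OF inj])
  also have "\<dots> = 0" using s0 by (simp add: z_def o_def)
  finally have "sum z ((+) c ` S) = 0" .
  moreover have "\<forall>d\<in>(+) c ` S. z d \<in> Rg d" using v by (auto simp: z_def)
  ultimately have "z (c + a) = 0" using Runiq[of "(+) c ` S" z "c + a"] S a by simp
  then show ?thesis by (simp add: z_def)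
qed

lemma one_Rg0: "1 \<in> Rg 0"
proof -
  have "1 \<in> R" by (rule R1)
  then obtain e S where S: "finite S" "\<forall>\<alpha>\<in>S. e \<alpha> \<in> Rg \<alpha>" and e1: "1 = sum e S"
    by (subst (asm) Rdef) blast
  have "\<exists>a0\<in>S. e a0 \<noteq> 0"
  proof (rule ccontr)
    assume "\<not> (\<exists>a0\<in>S. e a0 \<noteq> 0)"
    then have "sum e S = 0" by (simp add: sum.neutral)
    then show False using e1 by simp
  qed
  then obtain a0 where a0: "a0 \<in> S" "e a0 \<noteq> 0" by blast
  define h where "h = e a0"
  define S' where "S' = insert 0 S"
  define v where "v a = (if a = 0 then h else 0) - (if a \<in> S then h * e a else 0)" for a
  have fS': "finite S'" using S by (simp add: S'_def)
  have vR: "v a \<in> Rg (a0 + a)" if "a \<in> S'" for a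
  proof -
    have "(if a = 0 then h else 0) \<in> Rg (a0 + a)" using S a0 by (auto simp: h_def Rg0)
    moreover have "(if a \<in> S then h * e a else 0) \<in> Rg (a0 + a)"
      using S a0 by (auto simp: h_def Rg0 intro!: Rgmul)
    ultimately show ?thesis unfolding v_def diff_conv_add_uminus by (rule Rgadd[OF _ Rgneg])
  qed
  have "sum v S' = (\<Sum>a\<in>S'. if a = 0 then h else 0) - (\<Sum>a\<in>S'. if a \<in> S then h * e a else 0)"
    unfolding v_def by (simp add: sum_subtractf)
  also have "(\<Sum>a\<in>S'. if a = 0 then h else 0) = h" using fS' by (simp add: S'_def)
  also have "(\<Sum>a\<in>S'. if a \<in> S then h * e a else 0) = (\<Sum>a\<in>S. h * e a)"
    using fS' by (simp add: sum.inter_restrict[symmetric] S'_def Int_absorb1 subset_insertI)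
  also have "\<dots> = h" using e1 by (simp add: sum_distrib_left[symmetric])
  finally have "sum v S' = 0" by simp
  then have v0: "\<And>a. a \<in> S' \<Longrightarrow> v a = 0" using Runiq_shift[OF fS' vR] by blast
  have "e a = 0" if "a \<in> S" "a \<noteq> 0" for a
    using v0[of a] that a0 by (simp add: v_def S'_def h_def)
  then have "\<forall>a\<in>S. e a \<in> Rg 0" using S by (auto simp: Rg0) (metis Rg0)
  then show ?thesis unfolding e1 using S by (intro Rg_sum) auto
qed


lemma Rg_prod: "finite I \<Longrightarrow> (\<And>i. i \<in> I \<Longrightarrow> f i \<in> Rg (g i)) \<Longrightarrow> prod f I \<in> Rg (sum g I)"
  by (induction I rule: finite_induct) (auto intro: Rgmul one_Rg0)

abbreviation D where "D \<equiv> RH_deg Rg"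

lemma D_iff: "x \<in> D d \<longleftrightarrow> (\<exists>b h a c. x = b / h \<and> b \<in> Rg a \<and> h \<in> Rg c \<and> h \<noteq> 0 \<and> d = a - c)"
  unfolding RH_deg_def by blast

lemma D0: "0 \<in> D d"
  unfolding D_iff by (rule exI[of _ 0], rule exI[of _ 1], rule exI[of _ d], rule exI[of _ 0]) (simp add: Rg0 one_Rg0)

lemma Dadd: assumes "x \<in> D d" "y \<in> D d" shows "x + y \<in> D d"
proof -
  obtain b h a c where 1: "x = b / h" "b \<in> Rg a" "h \<in> Rg c" "h \<noteq> 0" "d = a - c" using assms(1) D_iff by auto
  obtain b' h' a' c' where 2: "y = b' / h'" "b' \<in> Rg a'" "h' \<in> Rg c'" "h' \<noteq> 0" "d = a' - c'" using assms(2) D_iff by auto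
  have a1: "a = d + c" using 1(5) by simp
  have a2: "a' = d + c'" using 2(5) by simp
  note a = a1 a2
  have e: "x + y = (b * h' + b' * h) / (h * h')" using 1 2 by (simp add: field_simps)
  have "b * h' \<in> Rg (a + c')" using 1 2 by (intro Rgmul)
  moreover have "b' * h \<in> Rg (a + c')"
  proof -
    have "b' * h \<in> Rg (a' + c)" using 1 2 by (intro Rgmul)
    moreover have "a' + c = a + c'" using a by (simp add: algebra_simps)
    ultimately show ?thesis by simp
  qed
  ultimately have "b * h' + b' * h \<in> Rg (a + c')" by (rule Rgadd)
  moreover have "h * h' \<in> Rg (c + c')" "h * h' \<noteq> 0" using 1 2 by (simp_all add: Rgmul)
  moreover have "d = (a + c') - (c + c')" using a by simp
  ultimately show ?thesis unfolding D_iff e by blast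
qed

lemma Dneg: assumes "x \<in> D d" shows "- x \<in> D d"
proof -
  obtain b h a c where 1: "x = b / h" "b \<in> Rg a" "h \<in> Rg c" "h \<noteq> 0" "d = a - c" using assms(1) D_iff by auto
  have "- x = (- b) / h" using 1 by simp
  moreover have "- b \<in> Rg a" using 1 by (simp add: Rgneg)
  ultimately show ?thesis unfolding D_iff using 1 by blast
qed

lemma Dsub: assumes "x \<in> D d" "y \<in> D d" shows "x - y \<in> D d"
  unfolding diff_conv_add_uminus by (rule Dadd[OF assms(1) Dneg[OF assms(2)]])

lemma Dmul: assumes "x \<in> D d" "y \<in> D e" shows "x * y \<in> D (d + e)"
proof -
  obtain b h a c where 1: "x = b / h" "b \<in> Rg a" "h \<in> Rg c" "h \<noteq> 0" "d = a - c" using assms(1) D_iff by auto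
  obtain b' h' a' c' where 2: "y = b' / h'" "b' \<in> Rg a'" "h' \<in> Rg c'" "h' \<noteq> 0" "e = a' - c'" using assms(2) D_iff by auto
  have "x * y = (b * b') / (h * h')" using 1(1) 2(1) by simp
  moreover have "b * b' \<in> Rg (a + a')" "h * h' \<in> Rg (c + c')" "h * h' \<noteq> 0" using 1 2 by (simp_all add: Rgmul)
  moreover have "d + e = (a + a') - (c + c')" unfolding 1(5) 2(5) by (simp add: algebra_simps)
  ultimately show ?thesis unfolding D_iff by blast
qed

lemma Dsum: "finite I \<Longrightarrow> (\<And>i. i \<in> I \<Longrightarrow> f i \<in> D d) \<Longrightarrow> sum f I \<in> D d"
  by (induction I rule: finite_induct) (auto intro: D0 Dadd)

lemma D_nzQ: assumes "x \<in> D d" "x \<noteq> 0" shows "d \<in> quot_group \<Gamma>"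
proof -
  obtain b h a c where 1: "x = b / h" "b \<in> Rg a" "h \<in> Rg c" "h \<noteq> 0" "d = a - c" using assms(1) D_iff by auto
  have "b \<noteq> 0" using 1 assms(2) by auto
  have "a \<in> \<Gamma>"
  proof (rule ccontr)
    assume "a \<notin> \<Gamma>" then have "Rg a = {0}" by (rule RgG)
    then show False using 1(2) \<open>b \<noteq> 0\<close> by simp
  qed
  moreover have "c \<in> \<Gamma>"
  proof (rule ccontr)
    assume "c \<notin> \<Gamma>" then have "Rg c = {0}" by (rule RgG)
    then show False using 1(3,4) by simp
  qed
  ultimately show ?thesis using 1 unfolding quot_group_def by blast
qed

lemma D_frac: assumes "x \<in> D d" shows "\<exists>r\<in>R. r \<noteq> 0 \<and> r * x \<in> R"
proof -
  obtain b h a c where 1: "x = b / h" "b \<in> Rg a" "h \<in> Rg c" "h \<noteq> 0" "d = a - c" using assms(1) D_iff by auto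
  then show ?thesis by (intro bexI[of _ h]) (auto intro: RgR)
qed

lemma D_uniq:
  assumes S: "finite S" and x: "\<And>g. g \<in> S \<Longrightarrow> x g \<in> D g" and s0: "sum x S = 0" and g: "g \<in> S"
  shows "x g = 0"
proof -
  have "\<forall>g\<in>S. \<exists>p. fst p \<in> Rg (snd p) \<and> fst p \<noteq> 0 \<and> x g * fst p \<in> Rg (g + snd p)"
  proof
    fix g assume "g \<in> S"
    from x[OF this] obtain b h a c where 1: "x g = b / h" "b \<in> Rg a" "h \<in> Rg c" "h \<noteq> 0" "g = a - c"
      unfolding D_iff by blast
    have "x g * h = b" "g + c = a" using 1 by simp_all
    then show "\<exists>p. fst p \<in> Rg (snd p) \<and> fst p \<noteq> 0 \<and> x g * fst p \<in> Rg (g + snd p)"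
      using 1 by (intro exI[of _ "(h, c)"]) simp
  qed
  from bchoice[OF this] obtain p where p: "\<forall>g\<in>S. fst (p g) \<in> Rg (snd (p g)) \<and> fst (p g) \<noteq> 0 \<and> x g * fst (p g) \<in> Rg (g + snd (p g))"
    by (elim exE)
  define hh where "hh g = fst (p g)" for g
  define cc where "cc g = snd (p g)" for g
  define Hp where "Hp = prod hh S"
  define Bt where "Bt = sum cc S"
  have "\<forall>g\<in>S. hh g \<noteq> 0" using p by (simp add: hh_def)
  then have Hp0: "Hp \<noteq> 0" using S by (simp add: Hp_def)
  have deg: "Hp * x g' \<in> Rg (Bt + g')" if g': "g' \<in> S" for g'
  proof -
    have e1: "Hp * x g' = (x g' * hh g') * prod hh (S - {g'})"
      unfolding Hp_def using S g' by (simp add: prod.remove mult_ac)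
    have e2: "x g' * hh g' \<in> Rg (g' + cc g')" using p g' by (simp add: hh_def cc_def)
    have e3: "prod hh (S - {g'}) \<in> Rg (sum cc (S - {g'}))"
      using p S by (intro Rg_prod) (auto simp: hh_def cc_def)
    have e4: "Bt + g' = (g' + cc g') + sum cc (S - {g'})"
      unfolding Bt_def using S g' by (simp add: sum.remove algebra_simps)
    show ?thesis unfolding e1 e4 by (rule Rgmul[OF e2 e3])
  qed
  have "(\<Sum>g'\<in>S. Hp * x g') = 0" using s0 by (simp add: sum_distrib_left[symmetric])
  then have "Hp * x g = 0" using Runiq_shift[OF S deg _ g] by simp
  then show ?thesis using Hp0 by simp
qed

lemma hcomp_eq:
  assumes S: "finite S" and x: "\<And>g. x g \<in> D g" and xz: "\<And>g. g \<notin> S \<Longrightarrow> x g = 0" and a: "a = sum x S"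
  shows "hcomp Rg d a = x d"
  unfolding hcomp_def
proof (rule the_equality)
  show "\<exists>x' S'. finite S' \<and> (\<forall>g\<in>S'. x' g \<in> D g) \<and> a = sum x' S' \<and> x d = (if d \<in> S' then x' d else 0)"
    using S x xz a by (intro exI[of _ x] exI[of _ S]) auto
next
  fix c assume "\<exists>x' S'. finite S' \<and> (\<forall>g\<in>S'. x' g \<in> D g) \<and> a = sum x' S' \<and> c = (if d \<in> S' then x' d else 0)"
  then obtain x' S' where S': "finite S'" "\<forall>g\<in>S'. x' g \<in> D g" "a = sum x' S'" "c = (if d \<in> S' then x' d else 0)"
    by blast
  define e where "e g = (if g \<in> S' then x' g else 0)" for g
  define y where "y g = x g - e g" for g
  define U where "U = S \<union> S'"
  have U: "finite U" using S S' by (simp add: U_def)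
  have yD: "y g \<in> D g" for g using x S' by (auto simp: y_def e_def intro!: Dsub D0)
  have "sum x U = sum x S" using U xz by (intro sum.mono_neutral_right) (auto simp: U_def)
  moreover have "sum e U = sum x' S'"
  proof -
    have "sum e U = sum e S'" using U by (intro sum.mono_neutral_right) (auto simp: U_def e_def)
    also have "\<dots> = sum x' S'" by (rule sum.cong) (auto simp: e_def)
    finally show ?thesis .
  qed
  ultimately have "sum y U = 0" using a S' by (simp add: y_def sum_subtractf)
  then have y0: "g \<in> U \<Longrightarrow> y g = 0" for g using D_uniq[OF U, of y] yD by blast
  show "c = x d"
  proof (cases "d \<in> U")
    case True then show ?thesis using y0[OF True] S' by (simp add: y_def e_def)
  next
    case False then show ?thesis using xz S' by (simp add: U_def)
  qed
qed

definition dec where "dec a \<longleftrightarrow> (\<exists>S x. finite S \<and> (\<forall>g. x g \<in> D g) \<and> (\<forall>g. g \<notin> S \<longrightarrow> x g = 0) \<and> a = sum x S)"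

lemma decE:
  assumes "dec a"
  obtains S where "finite S" "\<And>g. hcomp Rg g a \<in> D g" "\<And>g. g \<notin> S \<Longrightarrow> hcomp Rg g a = 0"
    "a = sum (\<lambda>g. hcomp Rg g a) S"
proof -
  obtain S x where 1: "finite S" "\<forall>g. x g \<in> D g" "\<forall>g. g \<notin> S \<longrightarrow> x g = 0" "a = sum x S"
    using assms unfolding dec_def by blast
  have "hcomp Rg g a = x g" for g using 1 by (intro hcomp_eq) auto
  then show ?thesis using that 1 by simp
qed

lemma hcomp_D: "dec a \<Longrightarrow> hcomp Rg g a \<in> D g" by (metis decE)

lemma dec_fin: "dec a \<Longrightarrow> finite {g. hcomp Rg g a \<noteq> 0}"
  by (metis (mono_tags, lifting) decE finite_subset mem_Collect_eq subsetI)

lemma dec_super: assumes "dec a" "finite T" "{g. hcomp Rg g a \<noteq> 0} \<subseteq> T"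
  shows "a = (\<Sum>g\<in>T. hcomp Rg g a)"
proof -
  obtain S where S: "finite S" "\<And>g. g \<notin> S \<Longrightarrow> hcomp Rg g a = 0" "a = sum (\<lambda>g. hcomp Rg g a) S"
    using assms(1) decE by metis
  have "sum (\<lambda>g. hcomp Rg g a) S = sum (\<lambda>g. hcomp Rg g a) (S \<inter> T)"
    using S assms(3) by (intro sum.mono_neutral_right) auto
  also have "\<dots> = sum (\<lambda>g. hcomp Rg g a) T"
    using assms S(1,2) by (intro sum.mono_neutral_left) auto
  finally show ?thesis using S by simp
qed

lemma hcomp_0: "hcomp Rg g 0 = 0"
  by (rule hcomp_eq[of "{}" "\<lambda>_. 0"]) (simp_all add: D0)

lemma dec_0: "dec 0" unfolding dec_def by (intro exI[of _ "{}"] exI[of _ "\<lambda>_. 0"]) (simp add: D0)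

lemma dec_add: assumes "dec a" "dec b"
  shows "dec (a + b) \<and> (\<forall>g. hcomp Rg g (a + b) = hcomp Rg g a + hcomp Rg g b)"
proof -
  obtain S where S: "finite S" "\<And>g. hcomp Rg g a \<in> D g" "\<And>g. g \<notin> S \<Longrightarrow> hcomp Rg g a = 0"
    "a = sum (\<lambda>g. hcomp Rg g a) S" using assms(1) decE by metis
  obtain T where T: "finite T" "\<And>g. hcomp Rg g b \<in> D g" "\<And>g. g \<notin> T \<Longrightarrow> hcomp Rg g b = 0"
    "b = sum (\<lambda>g. hcomp Rg g b) T" using assms(2) decE by metis
  define x where "x g = hcomp Rg g a + hcomp Rg g b" for g
  have fU: "finite (S \<union> T)" using S T by simp
  have "a = sum (\<lambda>g. hcomp Rg g a) (S \<union> T)" using assms(1) fU S by (intro dec_super) auto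
  moreover have "b = sum (\<lambda>g. hcomp Rg g b) (S \<union> T)" using assms(2) fU T by (intro dec_super) auto
  ultimately have e: "a + b = sum x (S \<union> T)" by (simp add: x_def sum.distrib)
  have xD: "x g \<in> D g" for g using S T by (simp add: x_def Dadd)
  have xz: "g \<notin> S \<union> T \<Longrightarrow> x g = 0" for g using S T by (simp add: x_def)
  have "dec (a + b)" unfolding dec_def using fU xD xz e by blast
  moreover have "hcomp Rg g (a + b) = x g" for g by (rule hcomp_eq[OF fU xD xz e])
  ultimately show ?thesis by (simp add: x_def)
qed

lemma dec_sum: "finite I \<Longrightarrow> (\<And>i. i \<in> I \<Longrightarrow> dec (f i)) \<Longrightarrow>
  dec (sum f I) \<and> (\<forall>g. hcomp Rg g (sum f I) = (\<Sum>i\<in>I. hcomp Rg g (f i)))"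
proof (induction I rule: finite_induct)
  case empty then show ?case by (simp add: dec_0 hcomp_0)
next
  case (insert i I)
  then have "dec (f i)" "dec (sum f I)" by auto
  from dec_add[OF this] insert show ?case by simp
qed

lemma dec_mul: assumes a: "dec a" and b: "dec b" and S: "finite S" "{g. hcomp Rg g a \<noteq> 0} \<subseteq> S"
  and T: "finite T" "{g. hcomp Rg g b \<noteq> 0} \<subseteq> T"
shows "dec (a * b) \<and> (\<forall>e. hcomp Rg e (a * b) =
   (\<Sum>g\<in>S. \<Sum>g'\<in>T. if g + g' = e then hcomp Rg g a * hcomp Rg g' b else 0))"
proof -
  define z where "z e = (\<Sum>g\<in>S. \<Sum>g'\<in>T. if g + g' = e then hcomp Rg g a * hcomp Rg g' b else 0)" for e
  define E where "E = (\<lambda>(g, g'). g + g') ` (S \<times> T)"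
  have fE: "finite E" using S T by (simp add: E_def)
  have zD: "z e \<in> D e" for e unfolding z_def
    using S T by (intro Dsum) (auto intro: D0 Dmul[OF hcomp_D[OF a] hcomp_D[OF b], simplified])
  have zz: "e \<notin> E \<Longrightarrow> z e = 0" for e unfolding z_def E_def
    by (intro sum.neutral ballI) force
  have "sum z E = (\<Sum>g\<in>S. \<Sum>g'\<in>T. \<Sum>e\<in>E. if g + g' = e then hcomp Rg g a * hcomp Rg g' b else 0)"
    unfolding z_def by (subst sum.swap) (subst (2) sum.swap, rule refl)
  also have "\<dots> = (\<Sum>g\<in>S. \<Sum>g'\<in>T. hcomp Rg g a * hcomp Rg g' b)"
  proof (intro sum.cong refl)
    fix g g' assume "g \<in> S" "g' \<in> T"
    then have "g + g' \<in> E" by (force simp: E_def)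
    then show "(\<Sum>e\<in>E. if g + g' = e then hcomp Rg g a * hcomp Rg g' b else 0) = hcomp Rg g a * hcomp Rg g' b"
      using fE by (simp add: sum.delta)
  qed
  also have "\<dots> = (\<Sum>g\<in>S. hcomp Rg g a) * (\<Sum>g'\<in>T. hcomp Rg g' b)" by (simp add: sum_product)
  also have "\<dots> = a * b" using dec_super[OF a S] dec_super[OF b T] by simp
  finally have e: "a * b = sum z E" by simp
  have "dec (a * b)" unfolding dec_def using fE zD zz e by blast
  moreover have "hcomp Rg e (a * b) = z e" for e by (rule hcomp_eq[OF fE zD zz e])
  ultimately show ?thesis by (simp add: z_def)
qed

lemma RH_dec: assumes "a \<in> RH R Rg \<Gamma>" shows "dec a"
proof -
  obtain b h where bh: "a = b / h" "b \<in> R" "h \<in> homog_nz \<Gamma> Rg" using assms unfolding RH_def by blast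
  obtain c where h: "h \<in> Rg c" "h \<noteq> 0" using bh(3) unfolding homog_nz_def by blast
  obtain e S where S: "finite S" "\<forall>\<alpha>\<in>S. e \<alpha> \<in> Rg \<alpha>" and be: "b = sum e S"
    using bh(2) by (subst (asm) Rdef) blast
  define x where "x g = (if g + c \<in> S then e (g + c) / h else 0)" for g
  define S' where "S' = (\<lambda>\<alpha>. \<alpha> - c) ` S"
  have fS': "finite S'" using S by (simp add: S'_def)
  have xD: "x g \<in> D g" for g
  proof (cases "g + c \<in> S")
    case True
    then have "x g = e (g + c) / h" "e (g + c) \<in> Rg (g + c)" using S by (simp_all add: x_def)
    then show ?thesis unfolding D_iff using h by (intro exI[of _ "e (g + c)"] exI[of _ h] exI[of _ "g + c"] exI[of _ c]) simp
  qed (simp add: x_def D0)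
  have xz: "g \<notin> S' \<Longrightarrow> x g = 0" for g
  proof -
    assume "g \<notin> S'"
    then have "g + c \<notin> S" unfolding S'_def by (metis add_diff_cancel image_eqI)
    then show ?thesis by (simp add: x_def)
  qed
  have inj: "inj_on (\<lambda>\<alpha>. \<alpha> - c) S" by (auto simp: inj_on_def)
  have "sum x S' = sum (x \<circ> (\<lambda>\<alpha>. \<alpha> - c)) S" unfolding S'_def by (rule sum.reindex[OF inj])
  also have "\<dots> = (\<Sum>\<alpha>\<in>S. e \<alpha> / h)" by (rule sum.cong) (auto simp: x_def)
  also have "\<dots> = a" using bh be by (simp add: sum_divide_distrib)
  finally show ?thesis unfolding dec_def using fS' xD xz by metis
qed

end

lemma conv_superset:
  assumes "finite X" "supp F \<subseteq> X" "finite Y" "supp G \<subseteq> Y"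
  shows "conv F G m = (\<Sum>p\<in>X. \<Sum>q\<in>Y. if p + q = m then F p * G q else 0)"
proof -
  have "conv F G m = (\<Sum>p\<in>supp F. \<Sum>q\<in>Y. if p + q = m then F p * G q else 0)"
    unfolding conv_def
    by (rule sum.cong[OF refl], rule sum.mono_neutral_left) (use assms in \<open>auto simp: supp_def\<close>)
  also have "\<dots> = (\<Sum>p\<in>X. \<Sum>q\<in>Y. if p + q = m then F p * G q else 0)"
  proof (rule sum.mono_neutral_left)
    show "\<forall>i\<in>X - supp F. (\<Sum>q\<in>Y. if i + q = m then F i * G q else 0) = 0"
      by (auto simp: supp_def cong: if_cong)
  qed (use assms in auto)
  finally show ?thesis .
qed

context gd begin

definition Fp :: "'k poly \<Rightarrow> nat \<times> 'g \<Rightarrow> 'k" where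
  "Fp f = (\<lambda>(i, g). hcomp Rg g (coeff f i))"

lemma Fp_apply[simp]: "Fp f (i, d) = hcomp Rg d (coeff f i)" by (simp add: Fp_def)

lemma Af_cont: "Af R Rg f = cont R (Fp f)"
proof
  show "Af R Rg f \<subseteq> cont R (Fp f)" unfolding Af_def
  proof (rule span_least[OF cont_mod], safe)
    fix i x assume "x \<in> Cont R Rg (coeff f i)"
    moreover have "Cont R Rg (coeff f i) \<subseteq> cont R (Fp f)" unfolding Cont_def
    proof (rule span_least[OF cont_mod], safe)
      fix d show "hcomp Rg d (coeff f i) \<in> cont R (Fp f)" using cont_mem[of "Fp f" "(i, d)"] by (simp add: Fp_def)
    qed
    ultimately show "x \<in> cont R (Fp f)" by blast
  qed
  show "cont R (Fp f) \<subseteq> Af R Rg f" unfolding cont_def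
  proof (rule span_least, simp add: Af_def, safe)
    fix p :: "nat \<times> 'g"
    obtain i d where p: "p = (i, d)" by force
    show "Fp f p \<in> Af R Rg f"
    proof (cases "i \<le> degree f")
      case True
      have "hcomp Rg d (coeff f i) \<in> Cont R Rg (coeff f i)" unfolding Cont_def by (rule span_sub) simp
      then have "hcomp Rg d (coeff f i) \<in> (\<Union>i\<in>{0..degree f}. Cont R Rg (coeff f i))" using True by auto
      then show ?thesis unfolding Af_def p Fp_def by (simp add: span_sub)
    next
      case False
      then have "coeff f i = 0" by (simp add: coeff_eq_0)
      then show ?thesis unfolding p Fp_def Af_def by (simp add: hcomp_0 mod0)
    qed
  qed
qed

definition SD :: "'k poly \<Rightarrow> 'g set" where
  "SD f = (\<Union>i\<in>{..degree f}. {g. hcomp Rg g (coeff f i) \<noteq> 0})"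

lemma SD_fin: "\<forall>i. coeff f i \<in> RH R Rg \<Gamma> \<Longrightarrow> finite (SD f)"
  unfolding SD_def by (auto intro!: dec_fin RH_dec)

lemma SD_sup: "{g. hcomp Rg g (coeff f i) \<noteq> 0} \<subseteq> SD f"
proof (cases "i \<le> degree f")
  case True then show ?thesis unfolding SD_def by auto
next
  case False then have "coeff f i = 0" by (simp add: coeff_eq_0)
  then show ?thesis by (simp add: hcomp_0)
qed

lemma Fp_supp_sub: "supp (Fp f) \<subseteq> {..degree f} \<times> SD f"
proof
  fix p assume "p \<in> supp (Fp f)"
  then obtain i d where p: "p = (i, d)" "hcomp Rg d (coeff f i) \<noteq> 0" by (cases p) (auto simp: supp_def Fp_def)
  then have "coeff f i \<noteq> 0" by (auto simp: hcomp_0)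
  then have "i \<le> degree f" by (meson le_degree)
  then show "p \<in> {..degree f} \<times> SD f" using p SD_sup[of f i] by auto
qed

lemma Fp_supp:
  assumes "\<forall>i. coeff f i \<in> RH R Rg \<Gamma>"
  shows "finite (supp (Fp f))" "supp (Fp f) \<subseteq> UNIV \<times> quot_group \<Gamma>"
proof -
  show "finite (supp (Fp f))" using Fp_supp_sub[of f] SD_fin[OF assms] by (meson finite_SigmaI finite_atMost finite_subset)
  show "supp (Fp f) \<subseteq> UNIV \<times> quot_group \<Gamma>"
  proof
    fix p assume "p \<in> supp (Fp f)"
    then obtain i d where p: "p = (i, d)" "hcomp Rg d (coeff f i) \<noteq> 0" by (cases p) (auto simp: supp_def Fp_def)
    have "hcomp Rg d (coeff f i) \<in> D d" using assms by (simp add: hcomp_D RH_dec)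
    then show "p \<in> UNIV \<times> quot_group \<Gamma>" using p D_nzQ by auto
  qed
qed

lemma sum_nat_delta:
  fixes T :: "nat \<Rightarrow> nat \<Rightarrow> 'k"
  assumes "k \<le> M"
  shows "(\<Sum>i\<le>M. \<Sum>j\<le>M. if i + j = k then T i j else 0) = (\<Sum>i\<le>k. T i (k - i))"
proof -
  have "(\<Sum>j\<le>M. if i + j = k then T i j else 0) = (if i \<le> k then T i (k - i) else 0)" if "i \<le> M" for i
  proof -
    have "(\<Sum>j\<le>M. if i + j = k then T i j else 0) = (\<Sum>j\<le>M. if j = k - i then (if i \<le> k then T i j else 0) else 0)"
      by (intro sum.cong refl) auto
    also have "\<dots> = (if i \<le> k then T i (k - i) else 0)" using assms by (simp add: sum.delta') (meson diff_le_self le_trans)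
    finally show ?thesis .
  qed
  then have "(\<Sum>i\<le>M. \<Sum>j\<le>M. if i + j = k then T i j else 0) = (\<Sum>i\<le>M. if i \<le> k then T i (k - i) else 0)"
    by (intro sum.cong) auto
  also have "\<dots> = (\<Sum>i\<le>k. if i \<le> k then T i (k - i) else 0)"
    using assms by (intro sum.mono_neutral_right) auto
  also have "\<dots> = (\<Sum>i\<le>k. T i (k - i))" by simp
  finally show ?thesis .
qed

lemma conv_Fp:
  assumes f: "\<forall>i. coeff f i \<in> RH R Rg \<Gamma>" and g: "\<forall>i. coeff g i \<in> RH R Rg \<Gamma>"
  shows "conv (Fp f) (Fp g) = Fp (f * g)"
proof
  fix m :: "nat \<times> 'g"
  obtain k e where m: "m = (k, e)" by force
  define M where "M = k + degree f + degree g"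
  define SF where "SF = SD f"
  define SG where "SG = SD g"
  have fin: "finite SF" "finite SG" using SD_fin f g by (simp_all add: SF_def SG_def)
  define T where "T i j = (\<Sum>a\<in>SF. \<Sum>b\<in>SG. if a + b = e then Fp f (i, a) * Fp g (j, b) else 0)" for i j
  have "conv (Fp f) (Fp g) m = (\<Sum>p\<in>{..M} \<times> SF. \<Sum>q\<in>{..M} \<times> SG. if p + q = m then Fp f p * Fp g q else 0)"
    by (rule conv_superset) (use fin Fp_supp_sub[of f] Fp_supp_sub[of g] in \<open>auto simp: M_def SF_def SG_def\<close>)
  also have "\<dots> = (\<Sum>i\<le>M. \<Sum>a\<in>SF. \<Sum>j\<le>M. \<Sum>b\<in>SG. if i + j = k \<and> a + b = e then Fp f (i, a) * Fp g (j, b) else 0)"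
    unfolding sum.cartesian_product' m by simp
  also have "\<dots> = (\<Sum>i\<le>M. \<Sum>j\<le>M. if i + j = k then T i j else 0)"
  proof (intro sum.cong refl)
    fix i
    have "(\<Sum>a\<in>SF. \<Sum>j\<le>M. \<Sum>b\<in>SG. if i + j = k \<and> a + b = e then Fp f (i, a) * Fp g (j, b) else 0)
       = (\<Sum>j\<le>M. \<Sum>a\<in>SF. \<Sum>b\<in>SG. if i + j = k \<and> a + b = e then Fp f (i, a) * Fp g (j, b) else 0)"
      by (rule sum.swap)
    also have "\<dots> = (\<Sum>j\<le>M. if i + j = k then T i j else 0)"
      unfolding T_def by (intro sum.cong refl) (auto intro!: sum.neutral)
    finally show "(\<Sum>a\<in>SF. \<Sum>j\<le>M. \<Sum>b\<in>SG. if i + j = k \<and> a + b = e then Fp f (i, a) * Fp g (j, b) else 0)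
       = (\<Sum>j\<le>M. if i + j = k then T i j else 0)" .
  qed
  also have "\<dots> = (\<Sum>i\<le>k. T i (k - i))" by (rule sum_nat_delta) (simp add: M_def)
  also have "\<dots> = Fp (f * g) m"
  proof -
    have dm: "dec (coeff f i * coeff g (k - i)) \<and> (\<forall>e. hcomp Rg e (coeff f i * coeff g (k - i)) =
       (\<Sum>a\<in>SF. \<Sum>b\<in>SG. if a + b = e then hcomp Rg a (coeff f i) * hcomp Rg b (coeff g (k - i)) else 0))" for i
      using f g fin SD_sup[of f i] SD_sup[of g "k - i"]
      by (intro dec_mul) (simp_all add: RH_dec SF_def SG_def)
    have "Fp (f * g) m = hcomp Rg e (\<Sum>i\<le>k. coeff f i * coeff g (k - i))"
      by (simp add: m Fp_def coeff_mult)
    also have "\<dots> = (\<Sum>i\<le>k. hcomp Rg e (coeff f i * coeff g (k - i)))"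
      using dec_sum[of "{..k}" "\<lambda>i. coeff f i * coeff g (k - i)"] dm by simp
    also have "\<dots> = (\<Sum>i\<le>k. T i (k - i))"
      using dm by (simp add: T_def cong: if_cong)
    finally show ?thesis by simp
  qed
  finally show "conv (Fp f) (Fp g) m = Fp (f * g) m" .
qed

end

definition fracel :: "'k::field set \<Rightarrow> 'k \<Rightarrow> bool" where
  "fracel R x \<longleftrightarrow> (\<exists>d\<in>R. d \<noteq> 0 \<and> d * x \<in> R)"

definition GG :: "'k::field set \<Rightarrow> 'k set \<Rightarrow> bool" where
  "GG R T \<longleftrightarrow> finite T \<and> (\<forall>t\<in>T. fracel R t) \<and> (\<exists>t\<in>T. t \<noteq> 0)"

context sr begin

lemma common_denom: "finite T \<Longrightarrow> (\<forall>t\<in>T. fracel R t) \<Longrightarrow> \<exists>d\<in>R. d \<noteq> 0 \<and> (\<forall>t\<in>T. d * t \<in> R)"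
proof (induction T rule: finite_induct)
  case empty then show ?case using R1 by (intro bexI[of _ 1]) auto
next
  case (insert x T)
  then obtain d where d: "d \<in> R" "d \<noteq> 0" "\<forall>t\<in>T. d * t \<in> R" by auto
  obtain d' where d': "d' \<in> R" "d' \<noteq> 0" "d' * x \<in> R" using insert.prems by (auto simp: fracel_def)
  have "\<forall>t\<in>insert x T. (d * d') * t \<in> R"
  proof
    fix t assume "t \<in> insert x T"
    then show "(d * d') * t \<in> R"
    proof
      assume "t = x" then show ?thesis using Rmul[OF d(1) d'(3)] by (simp add: mult.assoc)
    next
      assume "t \<in> T" then show ?thesis using Rmul[OF d'(1), of "d * t"] d(3) by (simp add: mult_ac)
    qed
  qed
  then show ?case using d d' by (intro bexI[of _ "d * d'"]) (auto intro: Rmul)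
qed

lemma GG_fg: assumes "GG R T" shows "fg_frac_ideal R (rspan R T)"
proof -
  have "finite T" "\<forall>t\<in>T. fracel R t" using assms by (simp_all add: GG_def)
  from common_denom[OF this] obtain d where d: "d \<in> R" "d \<noteq> 0" "\<forall>t\<in>T. d * t \<in> R" by blast
  have m: "rsubmodule R {x. d * x \<in> R}" unfolding rsubmodule_def
    by (auto intro: R0 Radd Rmul simp: distrib_left mult.left_commute)
  have "rspan R T \<subseteq> {x. d * x \<in> R}" by (rule span_least[OF m]) (use d in auto)
  then have "frac_ideal R (rspan R T)" unfolding frac_ideal_def using d span_mod by blast
  moreover obtain t where "t \<in> T" "t \<noteq> 0" using assms by (auto simp: GG_def)
  then have "rspan R T \<noteq> {0}" using span_sub[of t T] by auto
  ultimately show ?thesis unfolding fg_frac_ideal_def using assms by (auto simp: GG_def)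
qed

lemma mmul_span_eq: "mmul R (rspan R S) (rspan R T) = rspan R {s * t | s t. s \<in> S \<and> t \<in> T}"
proof
  show "mmul R (rspan R S) (rspan R T) \<subseteq> rspan R {s * t | s t. s \<in> S \<and> t \<in> T}"
    by (rule mmul_span_least[OF span_mod]) (auto intro: span_sub)
  show "rspan R {s * t | s t. s \<in> S \<and> t \<in> T} \<subseteq> mmul R (rspan R S) (rspan R T)"
    by (rule span_least[OF mmul_mod]) (auto intro!: mmul_mem span_sub)
qed

lemma GG_mul: assumes "GG R S" "GG R T" shows "GG R {s * t | s t. s \<in> S \<and> t \<in> T}"
proof -
  have "finite {s * t | s t. s \<in> S \<and> t \<in> T}" using assms by (auto simp: GG_def intro: finite_image_set2)
  moreover have "\<forall>x\<in>{s * t | s t. s \<in> S \<and> t \<in> T}. fracel R x"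
  proof safe
    fix s t assume "s \<in> S" "t \<in> T"
    then have "fracel R s" "fracel R t" using assms by (simp_all add: GG_def)
    then obtain d d' where "d \<in> R" "d \<noteq> 0" "d * s \<in> R" "d' \<in> R" "d' \<noteq> 0" "d' * t \<in> R"
      unfolding fracel_def by blast
    then show "fracel R (s * t)" unfolding fracel_def
    proof (intro bexI[of _ "d * d'"] conjI)
      show "d * d' * (s * t) \<in> R" using Rmul[OF \<open>d * s \<in> R\<close> \<open>d' * t \<in> R\<close>] by (simp add: mult_ac)
    qed (auto intro: Rmul)
  qed
  moreover obtain s t where "s \<in> S" "s \<noteq> 0" "t \<in> T" "t \<noteq> 0" using assms by (auto simp: GG_def)
  then have "\<exists>x\<in>{s * t | s t. s \<in> S \<and> t \<in> T}. x \<noteq> 0" by (intro bexI[of _ "s * t"]) auto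
  ultimately show ?thesis by (simp add: GG_def)
qed

lemma span_one: "rspan R {1} = R"
proof
  show "rspan R {1} \<subseteq> R" by (rule span_least[OF R_mod]) (simp add: R1)
  show "R \<subseteq> rspan R {1}"
  proof
    fix r assume "r \<in> R"
    then show "r \<in> rspan R {1}" using modsmul[OF span_mod, of r 1 "{1}"] span_sub[of 1 "{1}"] by simp
  qed
qed

lemma GG_one: "GG R {1}" unfolding GG_def fracel_def using R1 by (auto intro!: bexI[of _ 1])

lemma mpow_GG: "GG R T \<Longrightarrow> \<exists>T'. GG R T' \<and> mpow R (rspan R T) n = rspan R T'"
proof (induction n)
  case 0 then show ?case using GG_one span_one by (auto simp: mpow_0)
next
  case (Suc n)
  then obtain T' where "GG R T'" "mpow R (rspan R T) n = rspan R T'" by blast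
  then show ?case using GG_mul[OF Suc.prems] by (auto simp: mpow_Suc mmul_span_eq)
qed

end

context gd begin

lemma tfg_Q: "tfg (quot_group \<Gamma>)"
proof
  show "0 \<in> quot_group \<Gamma>" unfolding quot_group_def using Gam0 by force
  fix x y assume "x \<in> quot_group \<Gamma>" "y \<in> quot_group \<Gamma>"
  then obtain a b c d where "x = a - b" "y = c - d" "a \<in> \<Gamma>" "b \<in> \<Gamma>" "c \<in> \<Gamma>" "d \<in> \<Gamma>"
    unfolding quot_group_def by blast
  then show "x + y \<in> quot_group \<Gamma>" unfolding quot_group_def
    by (intro CollectI exI[of _ "a + c"] exI[of _ "b + d"]) (simp add: Gamadd algebra_simps)
next
  fix x assume "x \<in> quot_group \<Gamma>"
  then obtain a b where "x = a - b" "a \<in> \<Gamma>" "b \<in> \<Gamma>" unfolding quot_group_def by blast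
  then show "- x \<in> quot_group \<Gamma>" unfolding quot_group_def by auto
next
  fix x :: 'g and n :: nat assume "x \<in> quot_group \<Gamma>" "n > 0" "nsmul n x = 0"
  then show "x = 0" using tfree unfolding torsion_free_set_def by blast
qed

lemma dec_coeff_mult:
  assumes f: "\<forall>i. dec (coeff f i)" and g: "\<forall>i. dec (coeff g i)"
  shows "dec (coeff (f * g) k)"
proof -
  have "dec (coeff f i * coeff g (k - i))" for i
    using f g dec_mul[OF _ _ dec_fin order_refl dec_fin order_refl] by blast
  then show ?thesis unfolding coeff_mult using dec_sum[of "{..k}" "\<lambda>i. coeff f i * coeff g (k - i)"] by simp
qed

lemma Fp_fin:
  assumes f: "\<forall>i. dec (coeff f i)"
  shows "finite (supp (Fp f))"
proof -
  have "finite (SD f)" unfolding SD_def using f by (auto intro!: dec_fin)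
  then show ?thesis using Fp_supp_sub[of f] by (meson finite_SigmaI finite_atMost finite_subset)
qed

lemma Fp_GG:
  assumes f: "\<forall>i. dec (coeff f i)" and f0: "f \<noteq> 0"
  shows "GG R (range (Fp f))"
proof -
  have "range (Fp f) \<subseteq> insert 0 (Fp f ` supp (Fp f))" by (auto simp: supp_def)
  then have "finite (range (Fp f))" using Fp_fin[OF f] by (meson finite_imageI finite_insert finite_subset)
  moreover have "\<forall>t\<in>range (Fp f). fracel R t"
  proof safe
    fix p :: "nat \<times> 'g"
    obtain i d where p: "p = (i, d)" by force
    have "Fp f p \<in> D d" using f by (simp add: p hcomp_D)
    then show "fracel R (Fp f p)" using D_frac by (simp add: fracel_def)
  qed
  moreover have "\<exists>t\<in>range (Fp f). t \<noteq> 0"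
  proof -
    obtain i where i: "coeff f i \<noteq> 0" using f0 by (metis leading_coeff_0_iff)
    have "{d. hcomp Rg d (coeff f i) \<noteq> 0} \<noteq> {}"
    proof
      assume e: "{d. hcomp Rg d (coeff f i) \<noteq> 0} = {}"
      have "coeff f i = (\<Sum>d\<in>{}. hcomp Rg d (coeff f i))"
        using f e by (intro dec_super) auto
      then show False using i by simp
    qed
    then obtain d where "hcomp Rg d (coeff f i) \<noteq> 0" by blast
    then show ?thesis by (intro bexI[of _ "hcomp Rg d (coeff f i)"]) (auto simp: Fp_def intro: range_eqI[of _ _ "(i, d)"])
  qed
  ultimately show ?thesis by (simp add: GG_def)
qed

end

theorem proposition2p1:
  fixes \<Gamma> :: "'g::ab_group_add set" and Rg :: "'g \<Rightarrow> 'k::field set" and R :: "'k set"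
    and f g :: "'k poly"
  assumes "graded_domain \<Gamma> Rg R"
    and "f \<noteq> 0" and "g \<noteq> 0"
    and "\<forall>i. coeff f i \<in> RH R Rg \<Gamma>" and "\<forall>i. coeff g i \<in> RH R Rg \<Gamma>"
  shows "(\<exists>m::nat. m \<ge> 1 \<and>
            mmul R (mpow R (Af R Rg f) (m + 1)) (Af R Rg g) = mmul R (mpow R (Af R Rg f) m) (Af R Rg (f * g)))
         \<and> (\<forall>st. eab R st \<longrightarrow> st (Af R Rg (f * g)) = st (mmul R (Af R Rg f) (Af R Rg g)))"
proof -
  interpret gd \<Gamma> Rg R by (rule gd.intro) (rule assms(1))
  have U: "UPP (UNIV \<times> quot_group \<Gamma> :: (nat \<times> 'g) set)" using tfg.UPP_prod[OF tfg_Q] .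
  define F where "F = Fp f"
  define G where "G = Fp g"
  define A where "A = Af R Rg f"
  define B where "B = Af R Rg g"
  define C where "C = Af R Rg (f * g)"
  have df: "\<forall>i. dec (coeff f i)" and dg: "\<forall>i. dec (coeff g i)" using assms(4,5) by (simp_all add: RH_dec)
  have dfg: "\<forall>i. dec (coeff (f * g) i)" using dec_coeff_mult[OF df dg] by blast
  have A: "A = cont R F" and B: "B = cont R G" by (simp_all add: A_def B_def F_def G_def Af_cont)
  have C: "C = cont R (conv F G)" unfolding C_def F_def G_def Af_cont conv_Fp[OF assms(4,5)] ..
  have [simp]: "rsubmodule R A" "rsubmodule R B" "rsubmodule R C" by (simp_all add: A B C)
  have fF: "finite (supp F)" "supp F \<subseteq> UNIV \<times> quot_group \<Gamma>" using Fp_supp[OF assms(4)] by (simp_all add: F_def)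
  have fG: "finite (supp G)" "supp G \<subseteq> UNIV \<times> quot_group \<Gamma>" using Fp_supp[OF assms(5)] by (simp_all add: G_def)
  have GGF: "GG R (range F)" using Fp_GG[OF df assms(2)] by (simp add: F_def)
  have GGG: "GG R (range G)" using Fp_GG[OF dg assms(3)] by (simp add: G_def)
  have GGC: "GG R (range (conv F G))"
  proof -
    have "f * g \<noteq> 0" using assms(2,3) by simp
    from Fp_GG[OF dfg this] show ?thesis using conv_Fp[OF assms(4,5)] by (simp add: F_def G_def)
  qed
  have "supp G \<noteq> {}"
  proof
    assume "supp G = {}"
    then have "\<And>p. G p = 0" by (auto simp: supp_def)
    then have "range G = {0}" by auto
    then show False using GGG by (auto simp: GG_def)
  qed
  then obtain t where st: "card (supp G) = Suc t" using fG by (metis card_gt_0_iff gr0_implies_Suc)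
  have DM1: "mmul R (mpow R A (Suc t)) B \<subseteq> mmul R (mpow R A t) C"
    using DM[OF U fF(1) fG(1) fF(2) fG(2) \<open>supp G \<noteq> {}\<close>] by (simp add: st A B C)
  have CAB: "C \<subseteq> mmul R A B" unfolding C cont_def
  proof (rule span_least[OF mmul_mod], safe)
    fix m show "conv F G m \<in> mmul R A B" unfolding conv_def
      by (intro mod_sum[OF mmul_mod]) (auto simp: fF fG A B cont_mem mmul_mem mod0[OF mmul_mod])
  qed
  have eq: "mmul R (mpow R A (Suc t + 1)) B = mmul R (mpow R A (Suc t)) C"
  proof
    have "mmul R (mpow R A (Suc t + 1)) B = mmul R A (mmul R (mpow R A (Suc t)) B)"
      by (simp add: mpow_Suc mmul_ac)
    also have "\<dots> \<subseteq> mmul R A (mmul R (mpow R A t) C)" by (rule mmul_mono[OF order_refl DM1])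
    also have "\<dots> = mmul R (mpow R A (Suc t)) C" by (simp add: mpow_Suc mmul_ac)
    finally show "mmul R (mpow R A (Suc t + 1)) B \<subseteq> mmul R (mpow R A (Suc t)) C" .
    have "mmul R (mpow R A (Suc t)) C \<subseteq> mmul R (mpow R A (Suc t)) (mmul R A B)"
      by (rule mmul_mono[OF order_refl CAB])
    also have "\<dots> = mmul R (mpow R A (Suc t + 1)) B" by (simp add: mpow_Suc mmul_ac)
    finally show "mmul R (mpow R A (Suc t)) C \<subseteq> mmul R (mpow R A (Suc t + 1)) B" .
  qed
  have part2: "st C = st (mmul R A B)" if e: "eab R st" for st
  proof -
    define E where "E = mpow R A (Suc t)"
    have EE: "mmul R E (mmul R A B) = mmul R E C"
    proof -
      have "mmul R E (mmul R A B) = mmul R (mpow R A (Suc t + 1)) B" by (simp add: E_def mpow_Suc mmul_ac)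
      then show ?thesis using eq by (simp add: E_def)
    qed
    obtain T' where T': "GG R T'" "E = rspan R T'"
      using mpow_GG[OF GGF, of "Suc t"] by (auto simp: E_def A cont_def)
    have fgE: "fg_frac_ideal R E" using GG_fg[OF T'(1)] T'(2) by simp
    have fgAB: "fg_frac_ideal R (mmul R A B)"
      using GG_fg[OF GG_mul[OF GGF GGG]] by (simp add: A B cont_def mmul_span_eq)
    have fgC: "fg_frac_ideal R C" using GG_fg[OF GGC] by (simp add: C cont_def)
    have imp: "\<forall>X Y Z. fg_frac_ideal R X \<and> fg_frac_ideal R Y \<and> fg_frac_ideal R Z \<longrightarrow>
        st (mmul R X Y) \<subseteq> st (mmul R X Z) \<longrightarrow> st Y \<subseteq> st Z" using e unfolding eab_def by (rule conjunct2)
    have "st (mmul R A B) \<subseteq> st C" using imp fgE fgAB fgC EE by simp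
    moreover have "st C \<subseteq> st (mmul R A B)" using imp fgE fgAB fgC EE by simp
    ultimately show ?thesis by simp
  qed
  show ?thesis
  proof (intro conjI exI[of _ "Suc t"] allI impI)
    show "1 \<le> Suc t" by simp
    show "mmul R (mpow R (Af R Rg f) (Suc t + 1)) (Af R Rg g) = mmul R (mpow R (Af R Rg f) (Suc t)) (Af R Rg (f * g))"
      using eq by (simp add: A_def B_def C_def)
  next
    fix st assume "eab R st"
    from part2[OF this] show "st (Af R Rg (f * g)) = st (mmul R (Af R Rg f) (Af R Rg g))"
      by (simp add: A_def B_def C_def)
  qed
qed


end
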